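(* Let $\alpha\in(0,1)$, $\eta>0$, $\gamma>0$, $a>0$ with $a\neq1$, $b\in\mathbb R\setminus\{0\}$, and assume $b^2\neq\frac{(k_1^2-ak_2^2)(ak_1^2-k_2^2)}{(a+1)(k_1^2+k_2^2)}\pi^2$ for all $k_1,k_2\in\mathbb Z$ with $(k_1,k_2)\neq(0,0)$. Then the semigroup of contractions $e^{t\mathcal A}$ is not uniformly (exponentially) stable in the energy space $\mathcal H$.
   Context: Let $\mu(\xi)=|\xi|^{\frac{2\alpha-1}{2}}$ and $\kappa(\alpha)=\frac{\sin(\alpha\pi)}{\pi}$. Let $H^1_L(0,1)=\{u\in H^1(0,1):u(0)=0\}$. $\mathcal H=H^1_L(0,1)\times L^2(0,1)\times H^1_0(0,1)\times L^2(0,1)\times L^2(\mathbb R)$ with inner product $\langle(u,v,y,z,\omega),(\tilde u,\tilde v,\tilde y,\tilde z,\tilde\omega)\rangle_{\mathcal H}=\int_0^1(v\bar{\tilde v}+u_x\bar{\tilde u}_x+z\bar{\tilde z}+a y_x\bar{\tilde y}_x)dx+\gamma\kappa(\alpha)\int_{\mathbb R}\omega\bar{\tilde\omega}\,d\xi$. $D(\mathcal A)$ is the set of $(u,v,y,z,\omega)\in\mathcal H$ with $u\in H^2(0,1)\cap H^1_L(0,1)$, $y\in H^2(0,1)\cap H^1_0(0,1)$, $v\in H^1_L(0,1)$, $z\in H^1_0(0,1)$, $-(\xi^2+\eta)\omega+v(1)\mu(\xi)\in L^2(\mathbb R)$, $|\xi|\omega\in L^2(\mathbb R)$, $u_x(1)+\gamma\kappa(\alpha)\int_{\mathbb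 R}\mu(\xi)\omega(\xi)d\xi=0$, and $\mathcal A(u,v,y,z,\omega)=(v,\,u_{xx}-bz,\,z,\,ay_{xx}+bv,\,-(\xi^2+\eta)\omega+v(1)\mu(\xi))$; $\mathcal A$ generates a $C_0$-semigroup of contractions on $\mathcal H$. *)

theory Defs
  imports "HOL-Analysis.Analysis"
begin

definition L2on :: "real set \<Rightarrow> (real \<Rightarrow> complex) \<Rightarrow> bool" where
  "L2on S f \<longleftrightarrow> f \<in> borel_measurable (lebesgue_on S) \<and>
     integrable (lebesgue_on S) (\<lambda>x. (cmod (f x))^2)"

definition L2norm2 :: "real set \<Rightarrow> (real \<Rightarrow> complex) \<Rightarrow> real" where
  "L2norm2 S f = integral\<^sup>L (lebesgue_on S) (\<lambda>x. (cmod (f x))^2)"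

text \<open>u restricted to [0,1] is absolutely continuous with L2 derivative g
  (u is the continuous representative of an H1(0,1) function).\<close>
definition has_weak_deriv :: "(real \<Rightarrow> complex) \<Rightarrow> (real \<Rightarrow> complex) \<Rightarrow> bool" where
  "has_weak_deriv u g \<longleftrightarrow> L2on {0..1} g \<and>
     (\<forall>x\<in>{0..1}. u x = u 0 + integral\<^sup>L (lebesgue_on {0..x}) g)"

definition H1 :: "(real \<Rightarrow> complex) \<Rightarrow> bool" where
  "H1 u \<longleftrightarrow> (\<exists>g. has_weak_deriv u g)"

definition wderiv :: "(real \<Rightarrow> complex) \<Rightarrow> (real \<Rightarrow> complex)" where
  "wderiv u = (SOME g. has_weak_deriv u g)"

definition H1L :: "(real \<Rightarrow> complex) \<Rightarrow> bool" where
  "H1L u \<longleftrightarrow> H1 u \<and> u 0 = 0"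

definition H10 :: "(real \<Rightarrow> complex) \<Rightarrow> bool" where
  "H10 u \<longleftrightarrow> H1 u \<and> u 0 = 0 \<and> u 1 = 0"

definition H2 :: "(real \<Rightarrow> complex) \<Rightarrow> bool" where
  "H2 u \<longleftrightarrow> (\<exists>g. has_weak_deriv u g \<and> H1 g)"

text \<open>u_x(1) for u in H2: value at 1 of the continuous (H1) representative of u_x.\<close>
definition dx_at1 :: "(real \<Rightarrow> complex) \<Rightarrow> complex" where
  "dx_at1 u = (SOME c. \<exists>g. has_weak_deriv u g \<and> H1 g \<and> g 1 = c)"

definition wderiv2 :: "(real \<Rightarrow> complex) \<Rightarrow> (real \<Rightarrow> complex)" where
  "wderiv2 u = wderiv (SOME g. has_weak_deriv u g \<and> H1 g)"

definition mu :: "real \<Rightarrow> real \<Rightarrow> real" where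
  "mu \<alpha> \<xi> = \<bar>\<xi>\<bar> powr ((2*\<alpha> - 1)/2)"

definition kappa :: "real \<Rightarrow> real" where
  "kappa \<alpha> = sin (\<alpha>*pi) / pi"

type_synonym st = "(real \<Rightarrow> complex) \<times> (real \<Rightarrow> complex) \<times> (real \<Rightarrow> complex)
   \<times> (real \<Rightarrow> complex) \<times> (real \<Rightarrow> complex)"

fun st_add :: "st \<Rightarrow> st \<Rightarrow> st" where
  "st_add (u,v,y,z,w) (u',v',y',z',w') =
     (\<lambda>x. u x + u' x, \<lambda>x. v x + v' x, \<lambda>x. y x + y' x, \<lambda>x. z x + z' x, \<lambda>x. w x + w' x)"

fun st_scale :: "complex \<Rightarrow> st \<Rightarrow> st" where
  "st_scale c (u,v,y,z,w) =
     (\<lambda>x. c * u x, \<lambda>x. c * v x, \<lambda>x. c * y x, \<lambda>x. c * z x, \<lambda>x. c * w x)"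

definition st_diff :: "st \<Rightarrow> st \<Rightarrow> st" where
  "st_diff p q = st_add p (st_scale (-1) q)"

fun in_H :: "st \<Rightarrow> bool" where
  "in_H (u,v,y,z,w) \<longleftrightarrow> H1L u \<and> L2on {0..1} v \<and> H10 y \<and> L2on {0..1} z \<and> L2on UNIV w"

fun Hnorm :: "real \<Rightarrow> real \<Rightarrow> real \<Rightarrow> st \<Rightarrow> real" where
  "Hnorm a \<gamma> \<alpha> (u,v,y,z,w) = sqrt (L2norm2 {0..1} v + L2norm2 {0..1} (wderiv u)
      + L2norm2 {0..1} z + a * L2norm2 {0..1} (wderiv y) + \<gamma> * kappa \<alpha> * L2norm2 UNIV w)"

fun in_DA :: "real \<Rightarrow> real \<Rightarrow> real \<Rightarrow> st \<Rightarrow> bool" where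
  "in_DA \<gamma> \<alpha> \<eta> (u,v,y,z,w) \<longleftrightarrow> in_H (u,v,y,z,w) \<and>
     H2 u \<and> H1L u \<and> H2 y \<and> H10 y \<and> H1L v \<and> H10 z \<and>
     L2on UNIV (\<lambda>\<xi>. - complex_of_real (\<xi>^2 + \<eta>) * w \<xi> + v 1 * complex_of_real (mu \<alpha> \<xi>)) \<and>
     L2on UNIV (\<lambda>\<xi>. complex_of_real \<bar>\<xi>\<bar> * w \<xi>) \<and>
     integrable lebesgue (\<lambda>\<xi>. complex_of_real (mu \<alpha> \<xi>) * w \<xi>) \<and>
     dx_at1 u + complex_of_real (\<gamma> * kappa \<alpha>) *
        integral\<^sup>L lebesgue (\<lambda>\<xi>. complex_of_real (mu \<alpha> \<xi>) * w \<xi>) = 0"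

fun opA :: "real \<Rightarrow> real \<Rightarrow> real \<Rightarrow> real \<Rightarrow> st \<Rightarrow> st" where
  "opA a b \<alpha> \<eta> (u,v,y,z,w) =
     (v, \<lambda>x. wderiv2 u x - complex_of_real b * z x, z,
      \<lambda>x. complex_of_real a * wderiv2 y x + complex_of_real b * v x,
      \<lambda>\<xi>. - complex_of_real (\<xi>^2 + \<eta>) * w \<xi> + v 1 * complex_of_real (mu \<alpha> \<xi>))"

text \<open>T is a C0-semigroup of contractions on the (semi)normed space (Hs, N) whose
  generator is (D, A); everything is understood up to N-null differences
  (i.e. on equivalence classes of a.e. equal functions).\<close>
definition C0_contraction_sg_gen ::
  "(st \<Rightarrow> bool) \<Rightarrow> (st \<Rightarrow> real) \<Rightarrow> (st \<Rightarrow> bool) \<Rightarrow> (st \<Rightarrow> st) \<Rightarrow> (real \<Rightarrow> st \<Rightarrow> st) \<Rightarrow> bool" where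
  "C0_contraction_sg_gen Hs N D A T \<longleftrightarrow>
     (\<forall>t\<ge>0. \<forall>x. Hs x \<longrightarrow> Hs (T t x)) \<and>
     (\<forall>x. Hs x \<longrightarrow> N (st_diff (T 0 x) x) = 0) \<and>
     (\<forall>t\<ge>0. \<forall>s\<ge>0. \<forall>x. Hs x \<longrightarrow> N (st_diff (T (t+s) x) (T t (T s x))) = 0) \<and>
     (\<forall>t\<ge>0. \<forall>x y c. Hs x \<longrightarrow> Hs y \<longrightarrow>
        N (st_diff (T t (st_add x (st_scale c y))) (st_add (T t x) (st_scale c (T t y)))) = 0) \<and>
     (\<forall>t\<ge>0. \<forall>x. Hs x \<longrightarrow> N (T t x) \<le> N x) \<and>
     (\<forall>x. Hs x \<longrightarrow> ((\<lambda>t. N (st_diff (T t x) x)) \<longlongrightarrow> 0) (at_right 0)) \<and>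
     (\<forall>x. Hs x \<longrightarrow>
        ((\<exists>w. Hs w \<and> ((\<lambda>h. N (st_diff (st_scale (complex_of_real (1/h)) (st_diff (T h x) x)) w))
                          \<longlongrightarrow> 0) (at_right 0))
         \<longleftrightarrow> (\<exists>x'. D x' \<and> N (st_diff x x') = 0))) \<and>
     (\<forall>x. D x \<longrightarrow>
        ((\<lambda>h. N (st_diff (st_scale (complex_of_real (1/h)) (st_diff (T h x) x)) (A x)))
            \<longlongrightarrow> 0) (at_right 0))"

definition unif_exp_stable :: "(st \<Rightarrow> bool) \<Rightarrow> (st \<Rightarrow> real) \<Rightarrow> (real \<Rightarrow> st \<Rightarrow> st) \<Rightarrow> bool" where
  "unif_exp_stable Hs N T \<longleftrightarrow>
     (\<exists>M \<omega>. M > 0 \<and> \<omega> > 0 \<and> (\<forall>t\<ge>0. \<forall>x. Hs x \<longrightarrow> N (T t x) \<le> M * exp (- \<omega> * t) * N x))"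

end

theory Submission
  imports Defs
begin

lemma st_cases5: obtains u v y z w where "p = (u,v,y,z,w)" by (cases p)

lemma st_diff_split:
  "st_diff p q = st_add (st_diff p r) (st_diff r q)"
  by (rule st_cases5[of p]; rule st_cases5[of q]; rule st_cases5[of r]) (simp add: st_diff_def fun_eq_iff)

lemma st_diff_swap:
  "st_diff q p = st_scale (-1) (st_diff p q)"
  by (rule st_cases5[of p]; rule st_cases5[of q]) (simp add: st_diff_def fun_eq_iff)

lemma st_add_diff:
  "p = st_add q (st_diff p q)"
  by (rule st_cases5[of p]; rule st_cases5[of q]) (simp add: st_diff_def fun_eq_iff)

lemma st_scale_1: "st_scale 1 p = p"
  by (rule st_cases5[of p]) (simp add: fun_eq_iff)

lemma st_scale_scale: "st_scale c (st_scale d p) = st_scale (c*d) p"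
  by (rule st_cases5[of p]) (simp add: fun_eq_iff mult.assoc)

lemma st_split_Eh:
  "T = st_add (st_diff T (st_scale E x)) (st_scale E x)"
  by (rule st_cases5[of T]; rule st_cases5[of x]) (simp add: st_diff_def fun_eq_iff)

lemma st_step_id:
  "st_diff (st_add P (st_scale E Q)) (st_scale (E * F) x)
   = st_add P (st_scale E (st_diff Q (st_scale F x)))"
  by (rule st_cases5[of P]; rule st_cases5[of Q]; rule st_cases5[of x])
     (simp add: st_diff_def fun_eq_iff algebra_simps)

lemma st_claim1_id:
  assumes "h \<noteq> 0"
  shows "st_scale (complex_of_real (1/h)) (st_diff Th (st_scale E x)) =
    st_add (st_add (st_diff (st_scale (complex_of_real (1/h)) (st_diff Th x)) Ax)
                   (st_diff Ax (st_scale L x)))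
           (st_scale (L - (E - 1) / complex_of_real h) x)"
  using assms
  by (rule_tac st_cases5[of Th]; rule_tac st_cases5[of x]; rule_tac st_cases5[of Ax])
     (simp add: st_diff_def fun_eq_iff field_simps)

lemma eps_le: fixes X t R :: real assumes "t > 0" "\<And>\<delta>. \<delta> > 0 \<Longrightarrow> X \<le> t * (R + \<delta>)" shows "X \<le> t * R"
proof (rule ccontr)
  assume "\<not> X \<le> t * R"
  then have pos: "X - t*R > 0" by simp
  define d where "d = (X - t*R)/(2*t)"
  have "d > 0" unfolding d_def using pos assms by simp
  from assms(2)[OF this] have "X \<le> t * R + t * d" by (simp add: algebra_simps)
  also have "t * d = (X - t*R)/2" unfolding d_def using assms(1) by simp
  finally have "X \<le> t * R + (X - t * R) / 2" .
  then have "(X - t*R) / 2 \<le> 0" by (simp add: field_simps)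
  then show False using pos by simp
qed

context
  fixes Hs :: "st \<Rightarrow> bool" and N :: "st \<Rightarrow> real"
  assumes Hadd: "\<And>p q. Hs p \<Longrightarrow> Hs q \<Longrightarrow> Hs (st_add p q)"
    and Hscale: "\<And>c p. Hs p \<Longrightarrow> Hs (st_scale c p)"
    and Ntri: "\<And>p q. Hs p \<Longrightarrow> Hs q \<Longrightarrow> N (st_add p q) \<le> N p + N q"
    and Nscale: "\<And>c p. Hs p \<Longrightarrow> N (st_scale c p) = cmod c * N p"
    and Nnonneg: "\<And>p. N p \<ge> 0"
begin

lemma Hdiff: "Hs p \<Longrightarrow> Hs q \<Longrightarrow> Hs (st_diff p q)"
  unfolding st_diff_def by (intro Hadd Hscale)

lemma Ndiff_tri: "Hs p \<Longrightarrow> Hs q \<Longrightarrow> Hs r \<Longrightarrow> N (st_diff p q) \<le> N (st_diff p r) + N (st_diff r q)"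
proof -
  assume a: "Hs p" "Hs q" "Hs r"
  have "N (st_diff p q) = N (st_add (st_diff p r) (st_diff r q))"
    by (subst st_diff_split[of p q r]) (rule refl)
  also have "\<dots> \<le> N (st_diff p r) + N (st_diff r q)"
    by (rule Ntri) (use a Hdiff in auto)
  finally show ?thesis .
qed

lemma Ndiff_swap: "Hs p \<Longrightarrow> Hs q \<Longrightarrow> N (st_diff q p) = N (st_diff p q)"
proof -
  assume a: "Hs p" "Hs q"
  have "N (st_diff q p) = N (st_scale (-1) (st_diff p q))"
    by (subst st_diff_swap[of q p]) (rule refl)
  also have "\<dots> = N (st_diff p q)" using Nscale[of "st_diff p q" "-1"] Hdiff[OF a] by simp
  finally show ?thesis .
qed

lemma N_le_diff: "Hs p \<Longrightarrow> Hs q \<Longrightarrow> N p \<le> N q + N (st_diff p q)"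
proof -
  assume a: "Hs p" "Hs q"
  have "N p = N (st_add q (st_diff p q))"
    by (subst st_add_diff[of p q]) (rule refl)
  also have "\<dots> \<le> N q + N (st_diff p q)"
    by (rule Ntri) (use a Hdiff in auto)
  finally show ?thesis .
qed

context
  fixes D :: "st \<Rightarrow> bool" and A :: "st \<Rightarrow> st" and T :: "real \<Rightarrow> st \<Rightarrow> st"
  assumes C0: "C0_contraction_sg_gen Hs N D A T"
begin

lemma C0u: "C0_contraction_sg_gen Hs N D A T" by (rule C0)
lemmas C0d = C0u[unfolded C0_contraction_sg_gen_def]

lemma THs: "t \<ge> 0 \<Longrightarrow> Hs x \<Longrightarrow> Hs (T t x)"
  using C0d[THEN conjunct1] by blast

lemma T0: "Hs x \<Longrightarrow> N (st_diff (T 0 x) x) = 0"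
  using C0d[THEN conjunct2, THEN conjunct1] by blast

lemma Tsg: "t \<ge> 0 \<Longrightarrow> s \<ge> 0 \<Longrightarrow> Hs x \<Longrightarrow> N (st_diff (T (t+s) x) (T t (T s x))) = 0"
  using C0d[THEN conjunct2, THEN conjunct2, THEN conjunct1] by blast

lemma Tlin: "t \<ge> 0 \<Longrightarrow> Hs x \<Longrightarrow> Hs y \<Longrightarrow>
    N (st_diff (T t (st_add x (st_scale c y))) (st_add (T t x) (st_scale c (T t y)))) = 0"
  using C0d[THEN conjunct2, THEN conjunct2, THEN conjunct2, THEN conjunct1] by blast

lemma Tcontr: "t \<ge> 0 \<Longrightarrow> Hs x \<Longrightarrow> N (T t x) \<le> N x"
  using C0d[THEN conjunct2, THEN conjunct2, THEN conjunct2, THEN conjunct2, THEN conjunct1] by blast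

lemma Tgen: "D x \<Longrightarrow>
   ((\<lambda>h. N (st_diff (st_scale (complex_of_real (1/h)) (st_diff (T h x) x)) (A x))) \<longlongrightarrow> 0) (at_right 0)"
  using C0d[THEN conjunct2, THEN conjunct2, THEN conjunct2, THEN conjunct2, THEN conjunct2, THEN conjunct2, THEN conjunct2] by blast

lemma claim1:
  assumes Dx: "D x" and Hx: "Hs x" and HA: "Hs (A x)" and dp: "\<delta> > 0"
  shows "\<exists>h0>0. \<forall>h. 0 < h \<and> h < h0 \<longrightarrow>
     N (st_diff (T h x) (st_scale (exp (\<i> * complex_of_real (l*h))) x))
       \<le> h * (N (st_diff (A x) (st_scale (\<i> * complex_of_real l) x)) + \<delta>)"
proof -
  define L where "L = \<i> * complex_of_real l"
  define r where "r = st_diff (A x) (st_scale L x)"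
  have Hr: "Hs r" unfolding r_def by (intro Hdiff HA Hscale Hx)
  have e1: "eventually (\<lambda>h. N (st_diff (st_scale (complex_of_real (1/h)) (st_diff (T h x) x)) (A x)) < \<delta>/2) (at_right 0)"
    using Tgen[OF Dx] dp by (intro order_tendstoD(2)) auto
  have d1: "((\<lambda>z. exp (L*z)) has_field_derivative L) (at 0)"
    by (auto intro!: derivative_eq_intros)
  then have "((\<lambda>z. (exp (L*z) - exp (L*0)) / (z - 0)) \<longlongrightarrow> L) (at 0)"
    by (simp add: has_field_derivative_iff)
  then have lz: "((\<lambda>z. (exp (L*z) - 1) / z) \<longlongrightarrow> L) (at 0)" by simp
  have fl: "filterlim (\<lambda>h::real. complex_of_real h) (at 0) (at_right 0)"
    unfolding filterlim_at
  proof (intro conjI)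
    show "\<forall>\<^sub>F h in at_right 0. complex_of_real h \<in> UNIV \<and> complex_of_real h \<noteq> 0"
      using eventually_at_right_less[of "0::real"] by (auto elim!: eventually_mono)
    show "((\<lambda>h. complex_of_real h) \<longlongrightarrow> 0) (at_right 0)"
      by (intro tendsto_eq_intros) auto
  qed
  have "((\<lambda>h. (exp (L * complex_of_real h) - 1) / complex_of_real h) \<longlongrightarrow> L) (at_right 0)"
    using filterlim_compose[OF lz fl] by simp
  then have "((\<lambda>h. L - (exp (L * complex_of_real h) - 1) / complex_of_real h) \<longlongrightarrow> 0) (at_right 0)"
    using tendsto_diff[OF tendsto_const[of L]] by fastforce
  then have "((\<lambda>h. cmod (L - (exp (L * complex_of_real h) - 1) / complex_of_real h)) \<longlongrightarrow> 0) (at_right 0)"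
    using tendsto_norm_zero by blast
  then have "((\<lambda>h. cmod (L - (exp (L * complex_of_real h) - 1) / complex_of_real h) * N x) \<longlongrightarrow> 0) (at_right 0)"
    using tendsto_mult_left_zero by blast
  then have e2: "eventually (\<lambda>h. cmod (L - (exp (L * complex_of_real h) - 1) / complex_of_real h) * N x < \<delta>/2) (at_right 0)"
    using dp by (intro order_tendstoD(2)) auto
  have e3: "eventually (\<lambda>h. h > (0::real)) (at_right 0)"
    by (simp add: eventually_at_right_less)
  have "eventually (\<lambda>h. N (st_diff (T h x) (st_scale (exp (\<i> * complex_of_real (l*h))) x))
       \<le> h * (N r + \<delta>)) (at_right 0)"
    using e1 e2 e3
  proof eventually_elim
    case (elim h)
    define E where "E = exp (\<i> * complex_of_real (l*h))"
    have EL: "E = exp (L * complex_of_real h)" unfolding E_def L_def by (simp add: mult.commute mult.left_commute)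
    define P1 where "P1 = st_diff (st_scale (complex_of_real (1/h)) (st_diff (T h x) x)) (A x)"
    have HT: "Hs (T h x)" using THs elim Hx by auto
    have HP1: "Hs P1" unfolding P1_def by (intro Hdiff Hscale HT Hx HA)
    have Hd: "Hs (st_diff (T h x) (st_scale E x))" by (intro Hdiff Hscale HT Hx)
    have "N (st_scale (complex_of_real (1/h)) (st_diff (T h x) (st_scale E x)))
        = N (st_add (st_add P1 r) (st_scale (L - (E - 1) / complex_of_real h) x))"
      unfolding P1_def r_def using st_claim1_id[of h "T h x" E x "A x" L] elim by simp
    also have "\<dots> \<le> N (st_add P1 r) + N (st_scale (L - (E - 1) / complex_of_real h) x)"
      by (intro Ntri Hadd HP1 Hr Hscale Hx)
    also have "\<dots> \<le> N P1 + N r + cmod (L - (E - 1) / complex_of_real h) * N x"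
      using Ntri[OF HP1 Hr] Nscale[OF Hx] by simp
    also have "\<dots> \<le> N r + \<delta>" using elim unfolding P1_def EL by simp
    finally have "N (st_scale (complex_of_real (1/h)) (st_diff (T h x) (st_scale E x))) \<le> N r + \<delta>" .
    moreover have "N (st_scale (complex_of_real (1/h)) (st_diff (T h x) (st_scale E x)))
       = (1/h) * N (st_diff (T h x) (st_scale E x))"
    proof -
      have "cmod (complex_of_real (1/h)) = 1/h" using elim by (simp del: of_real_divide)
      then show ?thesis using Nscale[OF Hd, of "complex_of_real (1/h)"] by simp
    qed
    ultimately have "(1/h) * N (st_diff (T h x) (st_scale E x)) \<le> N r + \<delta>" by simp
    then have "N (st_diff (T h x) (st_scale E x)) \<le> h * (N r + \<delta>)"
      using elim by (simp add: field_simps)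
    then show ?case unfolding E_def .
  qed
  then obtain b where b: "b > 0" "\<And>h. h > 0 \<Longrightarrow> h < b \<Longrightarrow>
      N (st_diff (T h x) (st_scale (exp (\<i> * complex_of_real (l*h))) x)) \<le> h * (N r + \<delta>)"
    unfolding eventually_at_right_field by auto
  then show ?thesis unfolding r_def L_def by blast
qed

lemma claim2:
  assumes Hx: "Hs x" and h: "h \<ge> 0" and E: "cmod E = 1"
  shows "N (st_diff (T (real k * h) x) (st_scale (E^k) x)) \<le> real k * N (st_diff (T h x) (st_scale E x))"
proof (induction k)
  case 0
  have "st_scale (E^0) x = x" using st_scale_1 by simp
  then show ?case using T0[OF Hx] by simp
next
  case (Suc k)
  define t where "t = real k * h"
  define Eh where "Eh = st_diff (T h x) (st_scale E x)"
  have t0: "t \<ge> 0" unfolding t_def using h by simp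
  have HTh: "Hs (T h x)" using THs h Hx by auto
  have HEh: "Hs Eh" unfolding Eh_def by (intro Hdiff Hscale HTh Hx)
  have HTt: "\<And>y. Hs y \<Longrightarrow> Hs (T t y)" using THs t0 by auto
  have eqt: "real (Suc k) * h = t + h" unfolding t_def by (simp add: algebra_simps)
  have Thx: "T h x = st_add Eh (st_scale E x)" unfolding Eh_def by (rule st_split_Eh)
  define c' where "c' = st_add (T t Eh) (st_scale E (T t x))"
  have Hc': "Hs c'" unfolding c'_def by (intro Hadd Hscale HTt HEh Hx)
  have H1: "Hs (T (t+h) x)" using THs t0 h Hx by auto
  have H2: "Hs (T t (T h x))" using HTt HTh by auto
  have H3: "Hs (st_scale (E ^ Suc k) x)" using Hscale Hx by auto
  have "N (st_diff (T (t+h) x) (st_scale (E ^ Suc k) x))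
      \<le> N (st_diff (T (t+h) x) (T t (T h x))) + N (st_diff (T t (T h x)) (st_scale (E ^ Suc k) x))"
    by (rule Ndiff_tri[OF H1 H3 H2])
  also have "N (st_diff (T (t+h) x) (T t (T h x))) = 0" using Tsg t0 h Hx by auto
  also have "N (st_diff (T t (T h x)) (st_scale (E ^ Suc k) x))
      \<le> N (st_diff (T t (T h x)) c') + N (st_diff c' (st_scale (E ^ Suc k) x))"
    by (rule Ndiff_tri[OF H2 H3 Hc'])
  also have "N (st_diff (T t (T h x)) c') = 0"
    unfolding Thx c'_def by (rule Tlin[OF t0 HEh Hx])
  also have "st_diff c' (st_scale (E ^ Suc k) x)
      = st_add (T t Eh) (st_scale E (st_diff (T t x) (st_scale (E^k) x)))"
    unfolding c'_def by (simp add: st_step_id)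
  also have "N (st_add (T t Eh) (st_scale E (st_diff (T t x) (st_scale (E^k) x))))
      \<le> N (T t Eh) + N (st_scale E (st_diff (T t x) (st_scale (E^k) x)))"
    by (intro Ntri HTt HEh Hscale Hdiff Hx)
  also have "N (st_scale E (st_diff (T t x) (st_scale (E^k) x))) = N (st_diff (T t x) (st_scale (E^k) x))"
    using Nscale[OF Hdiff[OF HTt[OF Hx] Hscale[OF Hx]]] E by simp
  also have "N (T t Eh) \<le> N Eh" by (rule Tcontr[OF t0 HEh])
  finally have "N (st_diff (T (t+h) x) (st_scale (E ^ Suc k) x)) \<le> N Eh + N (st_diff (T t x) (st_scale (E^k) x))"
    by simp
  also have "\<dots> \<le> N Eh + real k * N Eh" using Suc.IH unfolding t_def Eh_def by simp
  finally show ?case unfolding eqt Eh_def by (simp add: algebra_simps)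
qed

lemma claim3:
  assumes Dx: "D x" and Hx: "Hs x" and HA: "Hs (A x)" and t: "t > 0"
  shows "N (st_diff (T t x) (st_scale (exp (\<i> * complex_of_real (l*t))) x))
       \<le> t * N (st_diff (A x) (st_scale (\<i> * complex_of_real l) x))"
proof (rule eps_le[OF t])
  fix \<delta> :: real assume dp: "\<delta> > 0"
  obtain h0 where h0: "h0 > 0" "\<And>h. 0 < h \<and> h < h0 \<longrightarrow>
     N (st_diff (T h x) (st_scale (exp (\<i> * complex_of_real (l*h))) x))
       \<le> h * (N (st_diff (A x) (st_scale (\<i> * complex_of_real l) x)) + \<delta>)"
    using claim1[OF Dx Hx HA dp, of l] by blast
  obtain k :: nat where k: "t / h0 < real k" using reals_Archimedean2 by blast
  have kpos: "real k > 0" using k t h0 by (smt (verit) divide_pos_pos)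
  define h where "h = t / real k"
  have hpos: "h > 0" unfolding h_def using t kpos by simp
  have hlt: "h < h0" unfolding h_def using k kpos h0 t by (simp add: field_simps)
  define E where "E = exp (\<i> * complex_of_real (l*h))"
  have E1: "cmod E = 1" unfolding E_def by (metis norm_exp_i_times of_real_mult mult.commute)
  have kh: "real k * h = t" unfolding h_def using kpos by simp
  have Ek: "E ^ k = exp (\<i> * complex_of_real (l*t))"
  proof -
    have "E ^ k = exp (of_nat k * (\<i> * complex_of_real (l*h)))" unfolding E_def by (simp add: exp_of_nat_mult)
    also have "of_nat k * (\<i> * complex_of_real (l*h)) = \<i> * complex_of_real (l * (real k * h))"
      by (simp add: algebra_simps)
    finally show ?thesis using kh by simp
  qed
  have "N (st_diff (T t x) (st_scale (exp (\<i> * complex_of_real (l*t))) x))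
      \<le> real k * N (st_diff (T h x) (st_scale E x))"
    using claim2[OF Hx _ E1, of h k] hpos kh Ek by simp
  also have "\<dots> \<le> real k * (h * (N (st_diff (A x) (st_scale (\<i> * complex_of_real l) x)) + \<delta>))"
    using h0(2)[of h] hpos hlt kpos unfolding E_def by (intro mult_left_mono) auto
  also have "\<dots> = t * (N (st_diff (A x) (st_scale (\<i> * complex_of_real l) x)) + \<delta>)"
    using kh by (simp add: mult.assoc[symmetric])
  finally show "N (st_diff (T t x) (st_scale (exp (\<i> * complex_of_real (l*t))) x))
       \<le> t * (N (st_diff (A x) (st_scale (\<i> * complex_of_real l) x)) + \<delta>)" .
qed

lemma resolvent_bound:
  assumes st: "unif_exp_stable Hs N T"
  shows "\<exists>C. \<forall>x l. D x \<longrightarrow> Hs x \<longrightarrow> Hs (A x) \<longrightarrow>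
      N x \<le> C * N (st_diff (A x) (st_scale (\<i> * complex_of_real l) x))"
proof -
  obtain M \<omega> where M: "M > 0" "\<omega> > 0" and dec: "\<And>t x. t \<ge> 0 \<Longrightarrow> Hs x \<Longrightarrow> N (T t x) \<le> M * exp (- \<omega> * t) * N x"
    using st unfolding unif_exp_stable_def by blast
  define t0 where "t0 = (\<bar>ln (2*M)\<bar> + 1) / \<omega>"
  have t0: "t0 > 0" unfolding t0_def using M by simp
  have "exp (\<omega> * t0) = exp (\<bar>ln (2*M)\<bar> + 1)" unfolding t0_def using M by simp
  also have "\<dots> \<ge> exp (ln (2*M))" by simp
  also have "exp (ln (2*M)) = 2*M" using M by simp
  finally have ex: "exp (\<omega> * t0) \<ge> 2 * M" .
  have Mh: "M * exp (- \<omega> * t0) \<le> 1/2"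
  proof -
    have "M * exp (- \<omega> * t0) = M / exp (\<omega> * t0)" by (simp add: exp_minus field_simps)
    also have "\<dots> \<le> M / (2*M)" using ex M by (intro divide_left_mono) auto
    finally show ?thesis using M by simp
  qed
  show ?thesis
  proof (intro exI allI impI)
    fix x l assume Dx: "D x" and Hx: "Hs x" and HA: "Hs (A x)"
    define E where "E = exp (\<i> * complex_of_real (l*t0))"
    have E1: "cmod E = 1" unfolding E_def by (metis norm_exp_i_times of_real_mult mult.commute)
    have HT: "Hs (T t0 x)" using THs t0 Hx by auto
    have HE: "Hs (st_scale E x)" using Hscale Hx by auto
    have "N x = N (st_scale E x)" using Nscale[OF Hx] E1 by simp
    also have "\<dots> \<le> N (T t0 x) + N (st_diff (st_scale E x) (T t0 x))" by (rule N_le_diff[OF HE HT])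
    also have "N (st_diff (st_scale E x) (T t0 x)) = N (st_diff (T t0 x) (st_scale E x))"
      by (rule Ndiff_swap[OF HT HE])
    also have "\<dots> \<le> t0 * N (st_diff (A x) (st_scale (\<i> * complex_of_real l) x))"
      unfolding E_def by (rule claim3[OF Dx Hx HA t0])
    also have "N (T t0 x) \<le> M * exp (- \<omega> * t0) * N x" using dec t0 Hx by auto
    also have "\<dots> \<le> 1/2 * N x" using Mh Nnonneg[of x] by (intro mult_right_mono) auto
    finally show "N x \<le> (2*t0) * N (st_diff (A x) (st_scale (\<i> * complex_of_real l) x))" by simp
  qed
qed

end
end

lemma L2on_meas: "L2on S f \<Longrightarrow> f \<in> borel_measurable (lebesgue_on S)"
  by (simp add: L2on_def)

lemma L2on_sq_int: "L2on S f \<Longrightarrow> integrable (lebesgue_on S) (\<lambda>x. (cmod (f x))^2)"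
  by (simp add: L2on_def)

lemma sq_sum_bound:
  fixes a b t :: real assumes "t > 0" "a \<ge> 0" "b \<ge> 0"
  shows "(a + b)^2 \<le> (1+t) * a^2 + (1 + 1/t) * b^2"
proof -
  have "0 \<le> (t*a - b)^2 / t" using assms by simp
  also have "(t*a - b)^2 / t = t*a^2 - 2*a*b + b^2/t" using assms(1)
    by (simp add: power2_eq_square field_simps)
  finally have "2*a*b \<le> t*a^2 + b^2/t" by simp
  then show ?thesis by (simp add: power2_eq_square field_simps)
qed

lemma cmod_sum_sq_le:
  fixes x y :: complex assumes "t > 0"
  shows "(cmod (x + y))^2 \<le> (1+t) * (cmod x)^2 + (1 + 1/t) * (cmod y)^2"
proof -
  have "(cmod (x + y))^2 \<le> (cmod x + cmod y)^2"
    by (intro power_mono norm_triangle_ineq) auto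
  also have "\<dots> \<le> (1+t) * (cmod x)^2 + (1 + 1/t) * (cmod y)^2"
    by (rule sq_sum_bound) (use assms in auto)
  finally show ?thesis .
qed

lemma L2on_add: "L2on S f \<Longrightarrow> L2on S g \<Longrightarrow> L2on S (\<lambda>x. f x + g x)"
proof -
  assume f: "L2on S f" and g: "L2on S g"
  have [measurable]: "f \<in> borel_measurable (lebesgue_on S)" "g \<in> borel_measurable (lebesgue_on S)"
    using f g by (auto simp: L2on_def)
  have m: "(\<lambda>x. f x + g x) \<in> borel_measurable (lebesgue_on S)" by measurable
  have i: "integrable (lebesgue_on S) (\<lambda>x. 2 * (cmod (f x))^2 + 2 * (cmod (g x))^2)"
    using f g by (simp add: L2on_def)
  have "integrable (lebesgue_on S) (\<lambda>x. (cmod (f x + g x))^2)"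
  proof (rule Bochner_Integration.integrable_bound[OF i])
    show "(\<lambda>x. (cmod (f x + g x))^2) \<in> borel_measurable (lebesgue_on S)" using m by measurable
    show "AE x in lebesgue_on S. norm ((cmod (f x + g x))^2) \<le> norm (2 * (cmod (f x))^2 + 2 * (cmod (g x))^2)"
      using cmod_sum_sq_le[of 1] by (auto intro!: AE_I2)
  qed
  then show ?thesis using m by (simp add: L2on_def)
qed

lemma L2on_scale: "L2on S f \<Longrightarrow> L2on S (\<lambda>x. c * f x)"
proof -
  assume f: "L2on S f"
  have "integrable (lebesgue_on S) (\<lambda>x. (cmod c)^2 * (cmod (f x))^2)"
    using f by (simp add: L2on_def)
  moreover have [measurable]: "f \<in> borel_measurable (lebesgue_on S)" using f by (auto simp: L2on_def)
  moreover have "(\<lambda>x. c * f x) \<in> borel_measurable (lebesgue_on S)" by measurable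
  ultimately show ?thesis by (simp add: L2on_def norm_mult power_mult_distrib)
qed

lemma L2on_zero: "L2on S (\<lambda>x. 0)"
  by (simp add: L2on_def)

lemma L2norm2_nonneg: "L2norm2 S f \<ge> 0"
  unfolding L2norm2_def by (rule integral_nonneg_AE) auto

lemma L2norm2_scale: "L2norm2 S (\<lambda>x. c * f x) = (cmod c)^2 * L2norm2 S f"
  unfolding L2norm2_def by (simp add: norm_mult power_mult_distrib)

lemma L2norm2_add_le:
  assumes f: "L2on S f" and g: "L2on S g" and t: "t > 0"
  shows "L2norm2 S (\<lambda>x. f x + g x) \<le> (1+t) * L2norm2 S f + (1 + 1/t) * L2norm2 S g"
proof -
  have "L2norm2 S (\<lambda>x. f x + g x) \<le> integral\<^sup>L (lebesgue_on S) (\<lambda>x. (1+t) * (cmod (f x))^2 + (1 + 1/t) * (cmod (g x))^2)"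
    unfolding L2norm2_def
    by (intro integral_mono L2on_sq_int[OF L2on_add[OF f g]] cmod_sum_sq_le t)
       (use f g in \<open>simp add: L2on_def\<close>)
  also have "\<dots> = (1+t) * L2norm2 S f + (1 + 1/t) * L2norm2 S g"
    unfolding L2norm2_def using f g by (simp add: L2on_def)
  finally show ?thesis .
qed

lemma L2norm2_cong_AE:
  assumes "L2on S f" "L2on S g" "AE x in lebesgue_on S. f x = g x"
  shows "L2norm2 S f = L2norm2 S g"
  unfolding L2norm2_def
  by (rule integral_cong_AE) (use assms in \<open>auto simp: L2on_def elim: eventually_mono\<close>)

lemma ae_zero_borel:
  fixes g :: "real \<Rightarrow> real"
  assumes int: "integrable lborel g"
    and zero: "\<And>a. integral\<^sup>L lborel (\<lambda>t. indicator {a<..} t * g t) = 0"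
  shows "AE t in lborel. g t = 0"
proof -
  define gp where "gp t = max (g t) 0" for t
  define gn where "gn t = max (- g t) 0" for t
  have [measurable]: "g \<in> borel_measurable lborel" using int by measurable
  have igp: "integrable lborel gp" unfolding gp_def using int by auto
  have ign: "integrable lborel gn" unfolding gn_def using int by auto
  have mgp[measurable]: "gp \<in> borel_measurable lborel" unfolding gp_def by measurable
  have mgn[measurable]: "gn \<in> borel_measurable lborel" unfolding gn_def by measurable
  have em: "emeasure (density lborel (\<lambda>t. ennreal (h t))) {a<..} = ennreal (integral\<^sup>L lborel (\<lambda>t. h t * indicator {a<..} t))"
    if ih: "integrable lborel h" and nn: "\<And>t. h t \<ge> 0" for h :: "real \<Rightarrow> real" and a
  proof -
    have [measurable]: "h \<in> borel_measurable lborel" using ih by measurable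
    have "emeasure (density lborel (\<lambda>t. ennreal (h t))) {a<..} = (\<integral>\<^sup>+ t. ennreal (h t) * indicator {a<..} t \<partial>lborel)"
      by (subst emeasure_density) auto
    also have "\<dots> = (\<integral>\<^sup>+ t. ennreal (h t * indicator {a<..} t) \<partial>lborel)"
      by (intro nn_integral_cong) (auto split: split_indicator)
    also have "\<dots> = ennreal (integral\<^sup>L lborel (\<lambda>t. h t * indicator {a<..} t))"
      by (intro nn_integral_eq_integral integrable_real_mult_indicator ih) (auto simp: nn)
    finally show ?thesis .
  qed
  have eqint: "integral\<^sup>L lborel (\<lambda>t. gp t * indicator {a<..} t) = integral\<^sup>L lborel (\<lambda>t. gn t * indicator {a<..} t)" for a
  proof -
    have "integral\<^sup>L lborel (\<lambda>t. gp t * indicator {a<..} t) - integral\<^sup>L lborel (\<lambda>t. gn t * indicator {a<..} t)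
        = integral\<^sup>L lborel (\<lambda>t. gp t * indicator {a<..} t - gn t * indicator {a<..} t)"
      using Bochner_Integration.integral_diff[OF integrable_real_mult_indicator[OF _ igp] integrable_real_mult_indicator[OF _ ign], of "{a<..}" "{a<..}"] by simp
    also have "\<dots> = integral\<^sup>L lborel (\<lambda>t. indicator {a<..} t * g t)"
      by (intro Bochner_Integration.integral_cong) (auto simp: gp_def gn_def split: split_indicator)
    also have "\<dots> = 0" by (rule zero)
    finally show ?thesis by simp
  qed
  have PQ: "density lborel (\<lambda>t. ennreal (gp t)) = density lborel (\<lambda>t. ennreal (gn t))"
  proof (rule measure_eqI_lessThan)
    show "sets (density lborel (\<lambda>t. ennreal (gp t))) = sets borel" by simp
    show "sets (density lborel (\<lambda>t. ennreal (gn t))) = sets borel" by simp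
    show "emeasure (density lborel (\<lambda>t. ennreal (gp t))) {x<..} < \<infinity>" for x
      using em[OF igp, of x] by (simp add: gp_def)
    show "emeasure (density lborel (\<lambda>t. ennreal (gp t))) {x<..} = emeasure (density lborel (\<lambda>t. ennreal (gn t))) {x<..}" for x
      using em[OF igp, of x] em[OF ign, of x] eqint[of x] by (simp add: gp_def gn_def)
  qed
  have fin: "integral\<^sup>N lborel (\<lambda>t. ennreal (gp t)) \<noteq> \<infinity>"
    using nn_integral_eq_integral[OF igp] by (simp add: gp_def)
  have "AE t in lborel. ennreal (gp t) = ennreal (gn t)"
    using finite_density_unique[of "\<lambda>t. ennreal (gp t)" lborel "\<lambda>t. ennreal (gn t)"] PQ fin by auto
  then show ?thesis
    by (rule eventually_mono) (auto simp: gp_def gn_def max_def split: if_splits)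
qed

lemma ae_zero_real:
  fixes f :: "real \<Rightarrow> real"
  assumes int: "integrable lebesgue f"
    and supp: "\<And>t. t \<notin> {0..1} \<Longrightarrow> f t = 0"
    and zero: "\<And>x. x \<in> {0..1} \<Longrightarrow> integral\<^sup>L lebesgue (\<lambda>t. indicator {0..x} t * f t) = 0"
  shows "AE t in lebesgue. f t = 0"
proof -
  have all: "integral\<^sup>L lebesgue (\<lambda>t. indicator {a<..} t * f t) = 0" for a
  proof (cases "a < 0")
    case True
    have "integral\<^sup>L lebesgue (\<lambda>t. indicator {a<..} t * f t) = integral\<^sup>L lebesgue (\<lambda>t. indicator {0..1} t * f t)"
      by (intro Bochner_Integration.integral_cong refl) (use True supp in \<open>auto split: split_indicator\<close>)
    then show ?thesis using zero[of 1] by simp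
  next
    case False
    show ?thesis
    proof (cases "a \<ge> 1")
      case True
      have "(\<lambda>t. indicator {a<..} t * f t) = (\<lambda>t. 0::real)"
        by (rule ext) (use True supp in \<open>auto split: split_indicator\<close>)
      then show ?thesis by simp
    next
      case F2: False
      have "integral\<^sup>L lebesgue (\<lambda>t. indicator {a<..} t * f t)
          = integral\<^sup>L lebesgue (\<lambda>t. f t - f t * indicator {0..a} t)"
        by (intro Bochner_Integration.integral_cong refl) (use False F2 supp in \<open>auto split: split_indicator\<close>)
      also have "\<dots> = integral\<^sup>L lebesgue f - integral\<^sup>L lebesgue (\<lambda>t. f t * indicator {0..a} t)"
        by (intro Bochner_Integration.integral_diff int integrable_real_mult_indicator) auto
      also have "integral\<^sup>L lebesgue (\<lambda>t. f t * indicator {0..a} t) = 0"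
        using zero[of a] False F2 by (simp add: mult.commute)
      also have "integral\<^sup>L lebesgue f = integral\<^sup>L lebesgue (\<lambda>t. indicator {0..1} t * f t)"
        by (intro Bochner_Integration.integral_cong refl) (use supp in \<open>auto split: split_indicator\<close>)
      finally show ?thesis using zero[of 1] by simp
    qed
  qed
  have "f \<in> borel_measurable (completion lborel)" using int by measurable
  then obtain g where g: "g \<in> borel_measurable lborel" "AE t in lborel. f t = g t"
    using completion_ex_borel_measurable_real by blast
  have gL: "AE t in lebesgue. f t = g t" using g(2) by (rule AE_completion)
  have gmL: "g \<in> borel_measurable lebesgue" using g(1) by (rule measurable_completion)
  have igL: "integrable lebesgue g"
    using integrable_cong_AE_imp[OF int gmL gL] .
  have ig: "integrable lborel g" using igL integrable_completion[OF g(1)] by simp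
  have "AE t in lborel. g t = 0"
  proof (rule ae_zero_borel[OF ig])
    fix a
    have m1: "(\<lambda>t. indicator {a<..} t * g t) \<in> borel_measurable lborel" using g(1) by measurable
    have "integral\<^sup>L lborel (\<lambda>t. indicator {a<..} t * g t) = integral\<^sup>L lebesgue (\<lambda>t. indicator {a<..} t * g t)"
      using integral_completion[OF m1] by simp
    also have "\<dots> = integral\<^sup>L lebesgue (\<lambda>t. indicator {a<..} t * f t)"
    proof (intro integral_cong_AE)
      have [measurable]: "g \<in> borel_measurable lebesgue" "f \<in> borel_measurable lebesgue" using gmL int by auto
      show "(\<lambda>t. indicat_real {a<..} t * g t) \<in> borel_measurable lebesgue"
        by (intro borel_measurable_times borel_measurable_indicator gmL) auto
      show "(\<lambda>t. indicat_real {a<..} t * f t) \<in> borel_measurable lebesgue"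
        by (intro borel_measurable_times borel_measurable_indicator borel_measurable_integrable int) auto
      show "AE x in lebesgue. indicat_real {a<..} x * g x = indicat_real {a<..} x * f x"
        using gL by (auto elim: eventually_mono)
    qed
    also have "\<dots> = 0" by (rule all)
    finally show "integral\<^sup>L lborel (\<lambda>t. indicator {a<..} t * g t) = 0" .
  qed
  then have "AE t in lborel. f t = 0" using g(2) by eventually_elim auto
  then show ?thesis by (rule AE_completion)
qed

lemma L2on_int01:
  assumes "L2on {0..1} g"
  shows "integrable (lebesgue_on {0..1}) g"
proof (rule Bochner_Integration.integrable_bound)
  show "integrable (lebesgue_on {0..1}) (\<lambda>x. 1 + (cmod (g x))^2)"
    using assms continuous_imp_integrable_real[of 0 1 "\<lambda>x. 1::real"]
    by (intro Bochner_Integration.integrable_add) (auto simp: L2on_def)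
  show "g \<in> borel_measurable (lebesgue_on {0..1})" using assms by (simp add: L2on_def)
  show "AE x in lebesgue_on {0..1}. norm (g x) \<le> norm (1 + (cmod (g x))^2)"
  proof (intro AE_I2)
    fix x
    have "cmod (g x) \<le> 1 + (cmod (g x))^2"
    proof -
      have "0 \<le> (cmod (g x) - 1)^2" by simp
      then have "2 * cmod (g x) \<le> 1 + (cmod (g x))^2" by (simp add: power2_eq_square algebra_simps)
      then show ?thesis using norm_ge_zero[of "g x"] by linarith
    qed
    then show "norm (g x) \<le> norm (1 + (cmod (g x))^2)" by simp
  qed
qed

lemma int_leb_ind:
  assumes "L2on {0..1} g" "x \<in> {0..1}"
  shows "integrable lebesgue (\<lambda>t. indicator {0..x} t *\<^sub>R g t)"
proof -
  have i1: "integrable lebesgue (\<lambda>t. indicator {0..1} t *\<^sub>R g t)"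
    using L2on_int01[OF assms(1)] by (subst (asm) integrable_restrict_space) auto
  have "integrable lebesgue (\<lambda>t. indicator {0..x} t *\<^sub>R (indicator {0..1} t *\<^sub>R g t))"
    using integrable_mult_indicator[OF _ i1, of "{0..x}"] by simp
  moreover have "(\<lambda>t. indicator {0..x} t *\<^sub>R (indicator {0..1} t *\<^sub>R g t)) = (\<lambda>t. indicator {0..x} t *\<^sub>R g t)"
    using assms(2) by (auto simp: fun_eq_iff split: split_indicator)
  ultimately show ?thesis by simp
qed

lemma integral_on_leb:
  fixes g :: "real \<Rightarrow> complex" shows
  "integral\<^sup>L (lebesgue_on {a..b}) g = integral\<^sup>L lebesgue (\<lambda>t. indicator {a..b::real} t *\<^sub>R g t)"
  by (rule integral_restrict_space) simp

lemma hwd_L2: "has_weak_deriv u g \<Longrightarrow> L2on {0..1} g"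
  unfolding has_weak_deriv_def by blast

lemma hwd_eq: "has_weak_deriv u g \<Longrightarrow> x \<in> {0..1} \<Longrightarrow> u x = u 0 + integral\<^sup>L (lebesgue_on {0..x}) g"
  unfolding has_weak_deriv_def by blast

lemma weak_deriv_unique:
  assumes hg: "has_weak_deriv u g" and hh: "has_weak_deriv u h"
  shows "AE t in lebesgue_on {0..1}. g t = h t"
proof -
  have Lg: "L2on {0..1} g" and Lh: "L2on {0..1} h" using hg hh unfolding has_weak_deriv_def by blast+
  define K where "K t = indicator {0..1} t *\<^sub>R (g t - h t)" for t
  have iK: "integrable lebesgue K"
    unfolding K_def scaleR_diff_right
    by (intro Bochner_Integration.integrable_diff int_leb_ind Lg Lh) auto
  have zK: "integral\<^sup>L lebesgue (\<lambda>t. indicator {0..x} t *\<^sub>R K t) = 0" if x: "x \<in> {0..1}" for x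
  proof -
    have "(\<lambda>t. indicator {0..x} t *\<^sub>R K t) = (\<lambda>t. indicator {0..x} t *\<^sub>R g t - indicator {0..x} t *\<^sub>R h t)"
      using x by (auto simp: K_def fun_eq_iff split: split_indicator)
    then have "integral\<^sup>L lebesgue (\<lambda>t. indicator {0..x} t *\<^sub>R K t)
       = integral\<^sup>L lebesgue (\<lambda>t. indicator {0..x} t *\<^sub>R g t) - integral\<^sup>L lebesgue (\<lambda>t. indicator {0..x} t *\<^sub>R h t)"
      using Bochner_Integration.integral_diff[OF int_leb_ind[OF Lg x] int_leb_ind[OF Lh x]] by simp
    also have "\<dots> = integral\<^sup>L (lebesgue_on {0..x}) g - integral\<^sup>L (lebesgue_on {0..x}) h"
      by (simp add: integral_on_leb)
    also have "\<dots> = 0"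
    proof -
      have "u x = u 0 + integral\<^sup>L (lebesgue_on {0..x}) g" using hg x unfolding has_weak_deriv_def by blast
      moreover have "u x = u 0 + integral\<^sup>L (lebesgue_on {0..x}) h" using hh x unfolding has_weak_deriv_def by blast
      ultimately show ?thesis by simp
    qed
    finally show ?thesis .
  qed
  have "AE t in lebesgue. Re (K t) = 0"
  proof (rule ae_zero_real)
    show "integrable lebesgue (\<lambda>t. Re (K t))" by (rule integrable_Re[OF iK])
    show "Re (K t) = 0" if "t \<notin> {0..1}" for t using that by (simp add: K_def)
    show "integral\<^sup>L lebesgue (\<lambda>t. indicator {0..x} t * Re (K t)) = 0" if x: "x \<in> {0..1}" for x
    proof -
      have "integrable lebesgue (\<lambda>t. indicator {0..x} t *\<^sub>R K t)" by (rule integrable_mult_indicator[OF _ iK]) simp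
      then have "integral\<^sup>L lebesgue (\<lambda>t. Re (indicator {0..x} t *\<^sub>R K t)) = Re (integral\<^sup>L lebesgue (\<lambda>t. indicator {0..x} t *\<^sub>R K t))"
        by (rule integral_Re)
      then show ?thesis using zK[OF x] by simp
    qed
  qed
  moreover have "AE t in lebesgue. Im (K t) = 0"
  proof (rule ae_zero_real)
    show "integrable lebesgue (\<lambda>t. Im (K t))" by (rule integrable_Im[OF iK])
    show "Im (K t) = 0" if "t \<notin> {0..1}" for t using that by (simp add: K_def)
    show "integral\<^sup>L lebesgue (\<lambda>t. indicator {0..x} t * Im (K t)) = 0" if x: "x \<in> {0..1}" for x
    proof -
      have "integrable lebesgue (\<lambda>t. indicator {0..x} t *\<^sub>R K t)" by (rule integrable_mult_indicator[OF _ iK]) simp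
      then have "integral\<^sup>L lebesgue (\<lambda>t. Im (indicator {0..x} t *\<^sub>R K t)) = Im (integral\<^sup>L lebesgue (\<lambda>t. indicator {0..x} t *\<^sub>R K t))"
        by (rule integral_Im)
      then show ?thesis using zK[OF x] by simp
    qed
  qed
  ultimately have "AE t in lebesgue. t \<in> {0..1} \<longrightarrow> g t = h t"
  proof eventually_elim
    case (elim t)
    show ?case
    proof
      assume t: "t \<in> {0..1}"
      then have "K t = g t - h t" by (simp add: K_def)
      with elim have "g t - h t = 0" by (simp add: complex_eq_iff)
      then show "g t = h t" by simp
    qed
  qed
  moreover have "{0..1::real} \<inter> space lebesgue \<in> sets lebesgue" by simp
  ultimately show ?thesis using AE_restrict_space_iff[of "{0..1::real}" lebesgue] by simp
qed

lemma H1_wd: "H1 u \<Longrightarrow> has_weak_deriv u (wderiv u)"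
  unfolding H1_def wderiv_def by (erule someI_ex)

lemma int_on:
  fixes g :: "real \<Rightarrow> complex"
  assumes "L2on {0..1} g" "x \<in> {0..1}"
  shows "integrable (lebesgue_on {0..x}) g"
  using int_leb_ind[OF assms] by (subst integrable_restrict_space) auto

lemma hwd_add:
  assumes hu: "has_weak_deriv u g" and hv: "has_weak_deriv v h"
  shows "has_weak_deriv (\<lambda>x. u x + v x) (\<lambda>x. g x + h x)"
  unfolding has_weak_deriv_def
proof (intro conjI ballI)
  show "L2on {0..1} (\<lambda>x. g x + h x)" using hwd_L2[OF hu] hwd_L2[OF hv] by (rule L2on_add)
  fix x :: real assume x: "x \<in> {0..1}"
  have "integral\<^sup>L (lebesgue_on {0..x}) (\<lambda>x. g x + h x) = integral\<^sup>L (lebesgue_on {0..x}) g + integral\<^sup>L (lebesgue_on {0..x}) h"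
    by (intro Bochner_Integration.integral_add int_on hwd_L2[OF hu] hwd_L2[OF hv] x)
  moreover have "u x = u 0 + integral\<^sup>L (lebesgue_on {0..x}) g" by (rule hwd_eq[OF hu x])
  moreover have "v x = v 0 + integral\<^sup>L (lebesgue_on {0..x}) h" by (rule hwd_eq[OF hv x])
  ultimately show "u x + v x = u 0 + v 0 + integral\<^sup>L (lebesgue_on {0..x}) (\<lambda>x. g x + h x)"
    by (simp only: algebra_simps)
qed

lemma hwd_scale:
  assumes hu: "has_weak_deriv u g"
  shows "has_weak_deriv (\<lambda>x. c * u x) (\<lambda>x. c * g x)"
  unfolding has_weak_deriv_def
proof (intro conjI ballI)
  show "L2on {0..1} (\<lambda>x. c * g x)" using hwd_L2[OF hu] by (rule L2on_scale)
  fix x :: real assume x: "x \<in> {0..1}"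
  have "integral\<^sup>L (lebesgue_on {0..x}) (\<lambda>x. c * g x) = c * integral\<^sup>L (lebesgue_on {0..x}) g"
    by (rule integral_mult_right_zero)
  moreover have "u x = u 0 + integral\<^sup>L (lebesgue_on {0..x}) g" by (rule hwd_eq[OF hu x])
  ultimately show "c * u x = c * u 0 + integral\<^sup>L (lebesgue_on {0..x}) (\<lambda>x. c * g x)"
    by (simp only: algebra_simps)
qed

lemma H1_add: "H1 u \<Longrightarrow> H1 v \<Longrightarrow> H1 (\<lambda>x. u x + v x)"
  unfolding H1_def using hwd_add by blast

lemma H1_scale: "H1 u \<Longrightarrow> H1 (\<lambda>x. c * u x)"
  unfolding H1_def using hwd_scale by blast

lemma H1L_add: "H1L u \<Longrightarrow> H1L v \<Longrightarrow> H1L (\<lambda>x. u x + v x)"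
  unfolding H1L_def using H1_add by auto

lemma H1L_scale: "H1L u \<Longrightarrow> H1L (\<lambda>x. c * u x)"
  unfolding H1L_def using H1_scale by auto

lemma H10_add: "H10 u \<Longrightarrow> H10 v \<Longrightarrow> H10 (\<lambda>x. u x + v x)"
  unfolding H10_def using H1_add by auto

lemma H10_scale: "H10 u \<Longrightarrow> H10 (\<lambda>x. c * u x)"
  unfolding H10_def using H1_scale by auto

lemma wd_add_L2:
  assumes "H1 u" "H1 v"
  shows "L2norm2 {0..1} (wderiv (\<lambda>x. u x + v x)) = L2norm2 {0..1} (\<lambda>x. wderiv u x + wderiv v x)"
proof -
  have h1: "has_weak_deriv (\<lambda>x. u x + v x) (wderiv (\<lambda>x. u x + v x))" by (rule H1_wd[OF H1_add[OF assms]])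
  have h2: "has_weak_deriv (\<lambda>x. u x + v x) (\<lambda>x. wderiv u x + wderiv v x)"
    by (rule hwd_add[OF H1_wd[OF assms(1)] H1_wd[OF assms(2)]])
  show ?thesis by (rule L2norm2_cong_AE[OF hwd_L2[OF h1] hwd_L2[OF h2] weak_deriv_unique[OF h1 h2]])
qed

lemma wd_scale_L2:
  assumes "H1 u"
  shows "L2norm2 {0..1} (wderiv (\<lambda>x. c * u x)) = (cmod c)^2 * L2norm2 {0..1} (wderiv u)"
proof -
  have h1: "has_weak_deriv (\<lambda>x. c * u x) (wderiv (\<lambda>x. c * u x))" by (rule H1_wd[OF H1_scale[OF assms]])
  have h2: "has_weak_deriv (\<lambda>x. c * u x) (\<lambda>x. c * wderiv u x)"
    by (rule hwd_scale[OF H1_wd[OF assms(1)]])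
  have "L2norm2 {0..1} (wderiv (\<lambda>x. c * u x)) = L2norm2 {0..1} (\<lambda>x. c * wderiv u x)"
    by (rule L2norm2_cong_AE[OF hwd_L2[OF h1] hwd_L2[OF h2] weak_deriv_unique[OF h1 h2]])
  then show ?thesis by (simp add: L2norm2_scale)
qed

lemma in_H_add: "in_H p \<Longrightarrow> in_H q \<Longrightarrow> in_H (st_add p q)"
  by (rule st_cases5[of p]; rule st_cases5[of q])
     (simp add: H1L_add H10_add L2on_add)

lemma in_H_scale: "in_H p \<Longrightarrow> in_H (st_scale c p)"
  by (rule st_cases5[of p]) (simp add: H1L_scale H10_scale L2on_scale)

lemma eps_le2:
  fixes X B :: real
  assumes h: "\<And>\<delta>. \<delta> > 0 \<Longrightarrow> X \<le> B + B * \<delta>" and B: "B \<ge> 0"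
  shows "X \<le> B"
proof (cases "B = 0")
  case True then show ?thesis using h[of 1] by simp
next
  case False
  then have Bp: "B > 0" using B by simp
  have "X \<le> B * 1"
  proof (rule eps_le[OF Bp])
    fix \<delta> :: real assume "\<delta> > 0"
    then show "X \<le> B * (1 + \<delta>)" using h[of \<delta>] by (simp add: algebra_simps)
  qed
  then show ?thesis by simp
qed

lemma sqrt_tri_aux:
  fixes X A B :: real
  assumes A: "A \<ge> 0" and B: "B \<ge> 0" and h: "\<And>t. t > 0 \<Longrightarrow> X \<le> (1+t) * A + (1 + 1/t) * B"
  shows "sqrt X \<le> sqrt A + sqrt B"
proof -
  have "X \<le> (sqrt A + sqrt B)^2"
  proof (cases "A = 0")
    case True
    have "X \<le> B + B * \<delta>" if "\<delta> > 0" for \<delta>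
      using h[of "1/\<delta>"] that True by (simp add: algebra_simps)
    then have "X \<le> B" using eps_le2 B by blast
    then show ?thesis using True B by simp
  next
    case False
    then have Ap: "A > 0" using A by simp
    show ?thesis
    proof (cases "B = 0")
      case True
      have "X \<le> A + A * \<delta>" if "\<delta> > 0" for \<delta>
        using h[of \<delta>] that True by (simp add: algebra_simps)
      then have "X \<le> A" using eps_le2 A by blast
      then show ?thesis using True A by simp
    next
      case False
      then have Bp: "B > 0" using B by simp
      define t where "t = sqrt B / sqrt A"
      have tp: "t > 0" unfolding t_def using Ap Bp by simp
      have "(1+t) * A + (1 + 1/t) * B = (sqrt A + sqrt B)^2"
        unfolding t_def using Ap Bp
        by (simp add: field_simps power2_eq_square real_sqrt_mult[symmetric])
      then show ?thesis using h[OF tp] by simp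
    qed
  qed
  then have "sqrt X \<le> sqrt ((sqrt A + sqrt B)^2)" by (rule real_sqrt_le_mono)
  then show ?thesis using A B by simp
qed

lemma Hnorm_scale:
  assumes "in_H p"
  shows "Hnorm a \<gamma> \<alpha> (st_scale c p) = cmod c * Hnorm a \<gamma> \<alpha> p"
proof -
  obtain u v y z w where p: "p = (u,v,y,z,w)" by (rule st_cases5)
  have hu: "H1 u" and hy: "H1 y" using assms p by (auto simp: H1L_def H10_def)
  have "Hnorm a \<gamma> \<alpha> (st_scale c p) = sqrt ((cmod c)^2 * (L2norm2 {0..1} v + L2norm2 {0..1} (wderiv u)
      + L2norm2 {0..1} z + a * L2norm2 {0..1} (wderiv y) + \<gamma> * kappa \<alpha> * L2norm2 UNIV w))"
    unfolding p by (simp add: L2norm2_scale wd_scale_L2[OF hu] wd_scale_L2[OF hy] algebra_simps)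
  also have "\<dots> = cmod c * Hnorm a \<gamma> \<alpha> p"
    unfolding p by (simp add: real_sqrt_mult)
  finally show ?thesis .
qed

lemma Hnorm_nonneg:
  assumes a: "a \<ge> 0" and g: "\<gamma> * kappa \<alpha> \<ge> 0"
  shows "Hnorm a \<gamma> \<alpha> p \<ge> 0"
proof -
  obtain u v y z w where p: "p = (u,v,y,z,w)" by (rule st_cases5)
  have "0 \<le> L2norm2 {0..1} v + L2norm2 {0..1} (wderiv u)
      + L2norm2 {0..1} z + a * L2norm2 {0..1} (wderiv y) + \<gamma> * kappa \<alpha> * L2norm2 UNIV w"
    by (intro add_nonneg_nonneg mult_nonneg_nonneg[OF g] mult_nonneg_nonneg[OF a] L2norm2_nonneg)
  then show ?thesis unfolding p by simp
qed

lemma Hnorm_tri: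
  assumes a: "a \<ge> 0" and g: "\<gamma> * kappa \<alpha> \<ge> 0" and hp: "in_H p" and hq: "in_H q"
  shows "Hnorm a \<gamma> \<alpha> (st_add p q) \<le> Hnorm a \<gamma> \<alpha> p + Hnorm a \<gamma> \<alpha> q"
proof -
  obtain u v y z w where p: "p = (u,v,y,z,w)" by (rule st_cases5)
  obtain u' v' y' z' w' where q: "q = (u',v',y',z',w')" by (rule st_cases5)
  have hu: "H1 u" "H1 u'" and hy: "H1 y" "H1 y'" using hp hq p q by (auto simp: H1L_def H10_def)
  have Lu: "L2on {0..1} (wderiv u)" "L2on {0..1} (wderiv u')" using hu by (auto intro: hwd_L2 H1_wd)
  have Ly: "L2on {0..1} (wderiv y)" "L2on {0..1} (wderiv y')" using hy by (auto intro: hwd_L2 H1_wd)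
  have Lv: "L2on {0..1} v" "L2on {0..1} v'" and Lz: "L2on {0..1} z" "L2on {0..1} z'"
    and Lw: "L2on UNIV w" "L2on UNIV w'" using hp hq p q by auto
  define RA where "RA = L2norm2 {0..1} v + L2norm2 {0..1} (wderiv u)
      + L2norm2 {0..1} z + a * L2norm2 {0..1} (wderiv y) + \<gamma> * kappa \<alpha> * L2norm2 UNIV w"
  define RB where "RB = L2norm2 {0..1} v' + L2norm2 {0..1} (wderiv u')
      + L2norm2 {0..1} z' + a * L2norm2 {0..1} (wderiv y') + \<gamma> * kappa \<alpha> * L2norm2 UNIV w'"
  define X where "X = L2norm2 {0..1} (\<lambda>x. v x + v' x) + L2norm2 {0..1} (\<lambda>x. wderiv u x + wderiv u' x)
      + L2norm2 {0..1} (\<lambda>x. z x + z' x) + a * L2norm2 {0..1} (\<lambda>x. wderiv y x + wderiv y' x)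
      + \<gamma> * kappa \<alpha> * L2norm2 UNIV (\<lambda>x. w x + w' x)"
  have RAn: "RA \<ge> 0" unfolding RA_def by (intro add_nonneg_nonneg mult_nonneg_nonneg[OF g] mult_nonneg_nonneg[OF a] L2norm2_nonneg)
  have RBn: "RB \<ge> 0" unfolding RB_def by (intro add_nonneg_nonneg mult_nonneg_nonneg[OF g] mult_nonneg_nonneg[OF a] L2norm2_nonneg)
  have "Hnorm a \<gamma> \<alpha> (st_add p q) = sqrt X"
    unfolding p q X_def by (simp add: wd_add_L2 hu hy)
  also have "sqrt X \<le> sqrt RA + sqrt RB"
  proof (rule sqrt_tri_aux[OF RAn RBn])
    fix t :: real assume t: "t > 0"
    have "X \<le> ((1+t) * L2norm2 {0..1} v + (1 + 1/t) * L2norm2 {0..1} v')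
        + ((1+t) * L2norm2 {0..1} (wderiv u) + (1 + 1/t) * L2norm2 {0..1} (wderiv u'))
        + ((1+t) * L2norm2 {0..1} z + (1 + 1/t) * L2norm2 {0..1} z')
        + a * ((1+t) * L2norm2 {0..1} (wderiv y) + (1 + 1/t) * L2norm2 {0..1} (wderiv y'))
        + \<gamma> * kappa \<alpha> * ((1+t) * L2norm2 UNIV w + (1 + 1/t) * L2norm2 UNIV w')"
      unfolding X_def
      by (intro add_mono mult_left_mono L2norm2_add_le Lu Ly Lv Lz Lw t a g)
    also have "\<dots> = (1+t) * RA + (1 + 1/t) * RB"
      unfolding RA_def RB_def by (simp add: algebra_simps)
    finally show "X \<le> (1+t) * RA + (1 + 1/t) * RB" .
  qed
  also have "sqrt RA + sqrt RB = Hnorm a \<gamma> \<alpha> p + Hnorm a \<gamma> \<alpha> q"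
    unfolding p q RA_def RB_def by simp
  finally show ?thesis .
qed

lemma hwd_smooth:
  fixes U U' :: "real \<Rightarrow> real" and c :: complex
  assumes d: "\<And>x. (U has_real_derivative U' x) (at x)" and cU': "continuous_on {0..1} U'"
  shows "has_weak_deriv (\<lambda>x. c * complex_of_real (U x)) (\<lambda>x. c * complex_of_real (U' x))"
  unfolding has_weak_deriv_def
proof (intro conjI ballI)
  have cf: "continuous_on {0..1} (\<lambda>x. c * complex_of_real (U' x))"
    by (intro continuous_intros cU')
  show "L2on {0..1} (\<lambda>x. c * complex_of_real (U' x))"
    unfolding L2on_def
  proof
    show "(\<lambda>x. c * complex_of_real (U' x)) \<in> borel_measurable (lebesgue_on {0..1})"
      by (rule continuous_imp_measurable_on_sets_lebesgue[OF cf]) simp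
    have "continuous_on {0..1} (\<lambda>x. (cmod (c * complex_of_real (U' x)))^2)"
      by (intro continuous_intros cU')
    then show "integrable (lebesgue_on {0..1}) (\<lambda>x. (cmod (c * complex_of_real (U' x)))^2)"
      by (rule continuous_imp_integrable_real)
  qed
  fix x :: real assume x: "x \<in> {0..1}"
  have cfx: "continuous_on {0..x} (\<lambda>x. c * complex_of_real (U' x))"
    by (rule continuous_on_subset[OF cf]) (use x in auto)
  have "((\<lambda>t. c * complex_of_real (U' t)) has_integral
        (c * complex_of_real (U x) - c * complex_of_real (U 0))) {0..x}"
  proof (rule fundamental_theorem_of_calculus)
    show "0 \<le> x" using x by simp
    fix t assume "t \<in> {0..x}"
    show "((\<lambda>t. c * complex_of_real (U t)) has_vector_derivative c * complex_of_real (U' t)) (at t within {0..x})"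
      by (rule has_vector_derivative_mult_right, rule has_vector_derivative_of_real,
          rule has_field_derivative_at_within, rule d)
  qed
  moreover have "integral\<^sup>L (lebesgue_on {0..x}) (\<lambda>t. c * complex_of_real (U' t)) = integral {0..x} (\<lambda>t. c * complex_of_real (U' t))"
    by (rule lebesgue_integral_eq_integral[OF continuous_imp_integrable_real[OF cfx]]) simp
  ultimately have "integral\<^sup>L (lebesgue_on {0..x}) (\<lambda>t. c * complex_of_real (U' t)) = c * complex_of_real (U x) - c * complex_of_real (U 0)"
    by (metis integral_unique)
  then show "c * complex_of_real (U x) = c * complex_of_real (U 0) + integral\<^sup>L (lebesgue_on {0..x}) (\<lambda>t. c * complex_of_real (U' t))"
    by simp
qed

lemma cont_H1:
  assumes "H1 G" shows "continuous_on {0..1} G"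
proof -
  obtain g where hg: "has_weak_deriv G g" using assms unfolding H1_def by blast
  have Lg: "L2on {0..1} g" by (rule hwd_L2[OF hg])
  have "g integrable_on {0..1}" by (rule integrable_on_lebesgue_on[OF L2on_int01[OF Lg]]) simp
  then have ci: "continuous_on {0..1} (\<lambda>x. integral {0..x} g)" by (rule indefinite_integral_continuous_1)
  have "continuous_on {0..1} (\<lambda>x. G 0 + integral {0..x} g)" by (intro continuous_intros ci)
  moreover have "G 0 + integral {0..x} g = G x" if x: "x \<in> {0..1}" for x
  proof -
    have "integral\<^sup>L (lebesgue_on {0..x}) g = integral {0..x} g"
      by (rule lebesgue_integral_eq_integral[OF int_on[OF Lg x]]) simp
    then show ?thesis using hwd_eq[OF hg x] by simp
  qed
  ultimately show ?thesis by (rule continuous_on_eq) auto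
qed

lemma cont_ae_eq:
  fixes f g :: "real \<Rightarrow> complex"
  assumes cf: "continuous_on {0..1} f" and cg: "continuous_on {0..1} g"
    and ae: "AE t in lebesgue_on {0..1}. f t = g t"
  shows "\<forall>x\<in>{0..1}. f x = g x"
proof -
  have cp: "continuous_on {0..1} (\<lambda>t. cmod (f t - g t))" by (intro continuous_intros cf cg)
  have "integral\<^sup>L (lebesgue_on {0..1}) (\<lambda>t. cmod (f t - g t)) = 0"
    by (rule integral_eq_zero_AE) (use ae in \<open>auto elim: eventually_mono\<close>)
  then have "\<forall>x\<in>{0..1}. cmod (f x - g x) = 0"
    using integralL_eq_0_iff[OF cp] by simp
  then show ?thesis by simp
qed

lemma hwd_cong:
  assumes "\<forall>x\<in>{0..1}. G x = G' x" "has_weak_deriv G' h"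
  shows "has_weak_deriv G h"
proof -
  have "G 0 = G' 0" using assms(1) by simp
  show ?thesis
    unfolding has_weak_deriv_def
  proof (intro conjI ballI)
    show "L2on {0..1} h" by (rule hwd_L2[OF assms(2)])
    fix x :: real assume x: "x \<in> {0..1}"
    have "G' x = G' 0 + integral\<^sup>L (lebesgue_on {0..x}) h" by (rule hwd_eq[OF assms(2) x])
    moreover have "G x = G' x" using assms(1) x by blast
    ultimately show "G x = G 0 + integral\<^sup>L (lebesgue_on {0..x}) h" using \<open>G 0 = G' 0\<close> by simp
  qed
qed

lemma deriv_cont_on: "(\<And>x. (U has_real_derivative U' x) (at x)) \<Longrightarrow> continuous_on S U"
  by (meson DERIV_isCont continuous_at_imp_continuous_on)

lemma smooth2:
  fixes U U' U'' :: "real \<Rightarrow> real" and c :: complex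
  assumes d1: "\<And>x. (U has_real_derivative U' x) (at x)"
    and d2: "\<And>x. (U' has_real_derivative U'' x) (at x)"
    and c2: "continuous_on {0..1} U''"
  shows "H1 (\<lambda>x. c * complex_of_real (U x))" "H2 (\<lambda>x. c * complex_of_real (U x))"
    "dx_at1 (\<lambda>x. c * complex_of_real (U x)) = c * complex_of_real (U' 1)"
    "AE t in lebesgue_on {0..1}. wderiv2 (\<lambda>x. c * complex_of_real (U x)) t = c * complex_of_real (U'' t)"
    "L2on {0..1} (wderiv2 (\<lambda>x. c * complex_of_real (U x)))"
proof -
  define u where "u = (\<lambda>x. c * complex_of_real (U x))"
  define u' where "u' = (\<lambda>x. c * complex_of_real (U' x))"
  define u'' where "u'' = (\<lambda>x. c * complex_of_real (U'' x))"
  have c1: "continuous_on {0..1} U'" by (rule deriv_cont_on[OF d2])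
  have h1: "has_weak_deriv u u'" unfolding u_def u'_def by (rule hwd_smooth[OF d1 c1])
  have h2: "has_weak_deriv u' u''" unfolding u'_def u''_def by (rule hwd_smooth[OF d2 c2])
  have H1u': "H1 u'" using h2 unfolding H1_def by blast
  have cu': "continuous_on {0..1} u'" unfolding u'_def by (intro continuous_intros c1)
  show "H1 (\<lambda>x. c * complex_of_real (U x))" using h1 unfolding H1_def u_def by blast
  show "H2 (\<lambda>x. c * complex_of_real (U x))" using h1 H1u' unfolding H2_def u_def by blast
  have key: "\<forall>x\<in>{0..1}. g x = u' x" if "has_weak_deriv u g" "H1 g" for g
    by (rule cont_ae_eq[OF cont_H1[OF that(2)] cu' weak_deriv_unique[OF that(1) h1]])
  have "dx_at1 u = c * complex_of_real (U' 1)"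
    unfolding dx_at1_def
  proof (rule someI2)
    show "\<exists>g. has_weak_deriv u g \<and> H1 g \<and> g 1 = c * complex_of_real (U' 1)"
      using h1 H1u' unfolding u'_def by blast
    fix c' assume "\<exists>g. has_weak_deriv u g \<and> H1 g \<and> g 1 = c'"
    then obtain g where g: "has_weak_deriv u g" "H1 g" "g 1 = c'" by blast
    from key[OF g(1,2)] have "g 1 = u' 1" by simp
    then show "c' = c * complex_of_real (U' 1)" using g(3) unfolding u'_def by simp
  qed
  then show "dx_at1 (\<lambda>x. c * complex_of_real (U x)) = c * complex_of_real (U' 1)" unfolding u_def .
  define G where "G = (SOME g. has_weak_deriv u g \<and> H1 g)"
  have G: "has_weak_deriv u G \<and> H1 G" unfolding G_def
    by (rule someI[of "\<lambda>g. has_weak_deriv u g \<and> H1 g" u']) (use h1 H1u' in blast)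
  have GE: "\<forall>x\<in>{0..1}. G x = u' x" using key G by blast
  have hG: "has_weak_deriv G u''" by (rule hwd_cong[OF GE h2])
  have hG2: "has_weak_deriv G (wderiv G)" by (rule H1_wd) (use G in blast)
  have "AE t in lebesgue_on {0..1}. wderiv G t = u'' t" by (rule weak_deriv_unique[OF hG2 hG])
  moreover have w2: "wderiv2 u = wderiv G" unfolding wderiv2_def G_def ..
  ultimately show "AE t in lebesgue_on {0..1}. wderiv2 (\<lambda>x. c * complex_of_real (U x)) t = c * complex_of_real (U'' t)"
    unfolding u_def u''_def by simp
  show "L2on {0..1} (wderiv2 (\<lambda>x. c * complex_of_real (U x)))"
    using hwd_L2[OF hG2] w2 unfolding u_def by simp
qed

lemma d_sin2: fixes A B k j x :: real shows "((\<lambda>x. A * sin (k * x) + B * sin (j * x)) has_real_derivative (A * k * cos (k * x) + B * j * cos (j * x))) (at x)"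
  by (auto intro!: derivative_eq_intros simp: algebra_simps)

lemma d_cos2: fixes A B k j x :: real shows "((\<lambda>x. A * k * cos (k * x) + B * j * cos (j * x)) has_real_derivative
   (- A * k^2 * sin (k * x) - B * j^2 * sin (j * x))) (at x)"
  by (auto intro!: derivative_eq_intros simp: algebra_simps power2_eq_square)

lemma cont_sin2: fixes A B k j :: real and S :: "real set" shows "continuous_on S (\<lambda>x. - A * k^2 * sin (k * x) - B * j^2 * sin (j * x))"
  by (intro continuous_intros)

lemma smooth_sin2:
  fixes A B k j :: real and c :: complex
  defines "U \<equiv> \<lambda>x. A * sin (k * x) + B * sin (j * x)"
  shows "H1 (\<lambda>x. c * complex_of_real (U x))" "H2 (\<lambda>x. c * complex_of_real (U x))"
    "dx_at1 (\<lambda>x. c * complex_of_real (U x)) = c * complex_of_real (A * k * cos k + B * j * cos j)"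
    "AE t in lebesgue_on {0..1}. wderiv2 (\<lambda>x. c * complex_of_real (U x)) t
       = c * complex_of_real (- A * k^2 * sin (k * t) - B * j^2 * sin (j * t))"
    "L2on {0..1} (wderiv2 (\<lambda>x. c * complex_of_real (U x)))"
  using smooth2[OF d_sin2[of A k B j] d_cos2[of A k B j] cont_sin2[where A=A and k=k and B=B and j=j], where c=c] unfolding U_def by simp_all

lemma int_sin_sq:
  fixes k :: real
  assumes k: "k \<noteq> 0" and s: "sin (2*k) = 0"
  shows "integral\<^sup>L (lebesgue_on {0..1}) (\<lambda>t. (sin (k * t))^2) = 1/2"
proof -
  have d: "((\<lambda>t. t/2 - sin (2*k*t) / (4*k)) has_real_derivative (sin (k * t))^2) (at t)" for t
  proof -
    have "((\<lambda>t. t/2 - sin (2*k*t) / (4*k)) has_real_derivative (1/2 - cos (2*k*t) * (2*k) / (4*k))) (at t)"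
      by (auto intro!: derivative_eq_intros simp: algebra_simps)
    moreover have "1/2 - cos (2*k*t) * (2*k) / (4*k) = (sin (k * t))^2"
      using k cos_double_sin[of "k*t"] by (simp add: field_simps mult.assoc)
    ultimately show ?thesis by simp
  qed
  have "((\<lambda>t. (sin (k * t))^2) has_integral ((1/2 - sin (2*k*1) / (4*k)) - (0/2 - sin (2*k*0) / (4*k)))) {0..1}"
    by (rule fundamental_theorem_of_calculus)
       (auto intro!: has_field_derivative_at_within d simp: has_real_derivative_iff_has_vector_derivative[symmetric])
  then have hi: "((\<lambda>t. (sin (k * t))^2) has_integral (1/2)) {0..1}" using s by simp
  have "integral\<^sup>L (lebesgue_on {0..1}) (\<lambda>t. (sin (k * t))^2) = integral {0..1} (\<lambda>t. (sin (k * t))^2)"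
    by (rule lebesgue_integral_eq_integral[OF continuous_imp_integrable_real]) (auto intro!: continuous_intros)
  also have "\<dots> = 1/2" using hi by (rule integral_unique)
  finally show ?thesis .
qed

lemma L2on_cont: "continuous_on {0..1} f \<Longrightarrow> L2on {0..1} (f :: real \<Rightarrow> complex)"
  unfolding L2on_def
proof
  assume cf: "continuous_on {0..1} f"
  show "f \<in> borel_measurable (lebesgue_on {0..1})"
    by (rule continuous_imp_measurable_on_sets_lebesgue[OF cf]) simp
  have "continuous_on {0..1} (\<lambda>x. (cmod (f x))^2)" by (intro continuous_intros cf)
  then show "integrable (lebesgue_on {0..1}) (\<lambda>x. (cmod (f x))^2)"
    by (rule continuous_imp_integrable_real)
qed

lemma L2norm2_bound:
  assumes cf: "continuous_on {0..1} f" and b: "\<And>t. t \<in> {0..1} \<Longrightarrow> cmod (f t) \<le> K"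
  shows "L2norm2 {0..1} f \<le> K^2"
proof -
  have "L2norm2 {0..1} f \<le> integral\<^sup>L (lebesgue_on {0..1}) (\<lambda>t::real. K^2)"
    unfolding L2norm2_def
  proof (rule Bochner_Integration.integral_mono)
    show "integrable (lebesgue_on {0..1}) (\<lambda>x. (cmod (f x))^2)" using L2on_cont[OF cf] by (simp add: L2on_def)
    show "integrable (lebesgue_on {0..1}) (\<lambda>t::real. K^2)" by (rule continuous_imp_integrable_real) simp
    fix t assume "t \<in> space (lebesgue_on {0..1::real})"
    then have "t \<in> {0..1}" by simp
    then show "(cmod (f t))^2 \<le> K^2" using b by (intro power_mono) auto
  qed
  also have "\<dots> = K^2" by (simp add: measure_restrict_space)
  finally show ?thesis .
qed

lemma wderiv_zero_L2: "L2norm2 {0..1} (wderiv (\<lambda>x. 0)) = 0"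
proof -
  have h: "has_weak_deriv (\<lambda>x. 0) (\<lambda>x. 0)"
    unfolding has_weak_deriv_def by (simp add: L2on_zero)
  have h2: "has_weak_deriv (\<lambda>x. 0) (wderiv (\<lambda>x. 0))" using h H1_wd unfolding H1_def by blast
  have "L2norm2 {0..1} (wderiv (\<lambda>x. 0)) = L2norm2 {0..1} (\<lambda>x. 0)"
    by (rule L2norm2_cong_AE[OF hwd_L2[OF h2] L2on_zero weak_deriv_unique[OF h2 h]])
  then show ?thesis by (simp add: L2norm2_def)
qed

locale par =
  fixes s b :: real and n m :: nat
  assumes s: "s > 0" "s \<noteq> 1" and n: "n \<ge> 1" and m1: "real n * s \<le> real m" and m2: "real m < real n * s + 1"
begin

definition "lam = real n * pi * s"
definition "e = \<bar>s^2 - 1\<bar>"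
definition "CC = lam * b / (lam^2 - (real n * pi)^2)"
definition "DD = - CC * real n * (-1)^n * (-1)^m / real m"

lemma e_pos: "e > 0"
proof -
  have "s^2 \<noteq> 1" using s power2_eq_1_iff[of s] by auto
  then show ?thesis unfolding e_def by simp
qed

lemma m_pos: "real m > 0"
proof -
  have "real n * s > 0" using n s by simp
  then show ?thesis using m1 by linarith
qed

lemma lam_pos: "lam > 0" unfolding lam_def using n s by simp

lemma CC_eq: "CC = s * b / (real n * pi * (s^2 - 1))"
proof -
  have "s^2 - 1 \<noteq> 0" using e_pos unfolding e_def by auto
  then show ?thesis unfolding CC_def lam_def using n s
    by (simp add: field_simps power2_eq_square)
qed

lemma den_ne: "lam^2 - (real n * pi)^2 \<noteq> 0"
proof -
  have "lam^2 - (real n * pi)^2 = (real n * pi)^2 * (s^2 - 1)" unfolding lam_def by (simp add: algebra_simps power_mult_distrib)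
  moreover have "s^2 - 1 \<noteq> 0" using e_pos unfolding e_def by auto
  ultimately show ?thesis using n by simp
qed

lemma CC_prop: "CC * (lam^2 - (real n * pi)^2) = lam * b"
  unfolding CC_def using den_ne by simp

lemma abs_CC: "\<bar>CC\<bar> = s * \<bar>b\<bar> / (real n * pi * e)"
  unfolding CC_eq e_def using s n by (simp add: abs_mult abs_divide)

lemma abs_DD: "\<bar>DD\<bar> = s * \<bar>b\<bar> / (real m * pi * e)"
proof -
  have "\<bar>DD\<bar> = \<bar>CC\<bar> * real n / real m" unfolding DD_def using m_pos by (simp add: abs_mult abs_divide)
  also have "\<dots> = s * \<bar>b\<bar> / (real m * pi * e)" unfolding abs_CC using n by (simp add: field_simps)
  finally show ?thesis .
qed

lemma dU1: "CC * (real n * pi) * cos (real n * pi) + DD * (real m * pi) * cos (real m * pi) = 0"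
proof -
  have "((-1::real)^m)^2 = 1" by (simp add: power_even_eq[symmetric] power_mult_distrib)
  then have "((-1::real)^m) * (-1)^m = 1" by (simp add: power2_eq_square)
  then show ?thesis unfolding DD_def using m_pos by (simp add: field_simps)
qed

lemma bound_r2: "\<bar>DD * (lam^2 - (real m * pi)^2)\<bar> \<le> 2 * pi * s * \<bar>b\<bar> / e"
proof -
  have le: "lam \<le> real m * pi" unfolding lam_def using m1 by (simp add: mult.commute mult.left_commute)
  have "lam^2 \<le> (real m * pi)^2" using le lam_pos by (intro power_mono) auto
  then have "\<bar>lam^2 - (real m * pi)^2\<bar> = (real m * pi)^2 - lam^2" by simp
  also have "\<dots> = pi^2 * ((real m - real n * s) * (real m + real n * s))"
    unfolding lam_def by (simp add: power2_eq_square algebra_simps)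
  also have "\<dots> \<le> pi^2 * (1 * (2 * real m))"
    using m1 m2 s by (intro mult_left_mono mult_mono) auto
  finally have h: "\<bar>lam^2 - (real m * pi)^2\<bar> \<le> pi^2 * (2 * real m)" by simp
  have "\<bar>DD * (lam^2 - (real m * pi)^2)\<bar> = \<bar>DD\<bar> * \<bar>lam^2 - (real m * pi)^2\<bar>" by (simp add: abs_mult)
  also have "\<dots> \<le> \<bar>DD\<bar> * (pi^2 * (2 * real m))" by (intro mult_left_mono h) auto
  also have "\<dots> = 2 * pi * s * \<bar>b\<bar> / e" unfolding abs_DD using m_pos e_pos by (simp add: field_simps power2_eq_square)
  finally show ?thesis .
qed

lemma bound_r4: "lam * \<bar>b\<bar> * (\<bar>CC\<bar> + \<bar>DD\<bar>) \<le> s^2 * \<bar>b\<bar>^2 * (1 + 1/s) / e"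
proof -
  have nm: "real n / real m \<le> 1 / s" using m1 s m_pos by (simp add: field_simps)
  have "lam * \<bar>b\<bar> * (\<bar>CC\<bar> + \<bar>DD\<bar>) = s^2 * \<bar>b\<bar>^2 * (1 + real n / real m) / e"
  proof -
    obtain B where B: "\<bar>b\<bar> = B" by simp
    have "lam * B * (s * B / (real n * pi * e) + s * B / (real m * pi * e)) = s^2 * B^2 * (1 + real n / real m) / e"
      unfolding lam_def using n m_pos e_pos by (simp add: field_simps power2_eq_square)
    then show ?thesis unfolding abs_CC abs_DD B .
  qed
  also have "\<dots> \<le> s^2 * \<bar>b\<bar>^2 * (1 + 1/s) / e"
    using nm e_pos by (intro divide_right_mono mult_left_mono) auto
  finally show ?thesis .
qed

end

lemma L2on_diff: "L2on S f \<Longrightarrow> L2on S g \<Longrightarrow> L2on S (\<lambda>x. f x - g x)"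
proof -
  assume "L2on S f" "L2on S g"
  then have "L2on S (\<lambda>x. f x + (-1) * g x)" by (intro L2on_add L2on_scale)
  then show ?thesis by simp
qed

lemma L2norm2_zero: "L2norm2 S (\<lambda>x. 0) = 0" by (simp add: L2norm2_def)

context par
begin

definition "k1 = real n * pi"
definition "k2 = real m * pi"
definition "UU x = CC * sin (k1 * x) + DD * sin (k2 * x)"
definition "uu = (\<lambda>x. \<i> * complex_of_real (UU x))"
definition "vv = (\<lambda>x. (\<i> * complex_of_real lam) * uu x)"
definition "yy = (\<lambda>x. complex_of_real (sin (k1 * x)))"
definition "zz = (\<lambda>x. (\<i> * complex_of_real lam) * yy x)"
definition "XX = (uu, vv, yy, zz, (\<lambda>\<xi>::real. 0::complex))"

lemma k1_ne: "k1 \<noteq> 0" unfolding k1_def using n by simp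

lemma uu_props:
  "H1 uu" "H2 uu" "dx_at1 uu = 0"
  "AE t in lebesgue_on {0..1}. wderiv2 uu t = \<i> * complex_of_real (- CC * k1^2 * sin (k1 * t) - DD * k2^2 * sin (k2 * t))"
  "L2on {0..1} (wderiv2 uu)"
proof -
  note S = smooth_sin2[where A=CC and k=k1 and B=DD and j=k2 and c="\<i>"]
  have e: "(\<lambda>x. \<i> * complex_of_real (CC * sin (k1 * x) + DD * sin (k2 * x))) = uu"
    unfolding uu_def UU_def ..
  show "H1 uu" "H2 uu" "AE t in lebesgue_on {0..1}. wderiv2 uu t = \<i> * complex_of_real (- CC * k1^2 * sin (k1 * t) - DD * k2^2 * sin (k2 * t))"
    "L2on {0..1} (wderiv2 uu)"
    using S unfolding e by auto
  have "dx_at1 uu = \<i> * complex_of_real (CC * k1 * cos k1 + DD * k2 * cos k2)" using S(3) unfolding e .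
  also have "CC * k1 * cos k1 + DD * k2 * cos k2 = 0" unfolding k1_def k2_def by (rule dU1)
  finally show "dx_at1 uu = 0" by simp
qed

lemma yy_props:
  "H1 yy" "H2 yy"
  "AE t in lebesgue_on {0..1}. wderiv2 yy t = complex_of_real (- (k1^2 * sin (k1 * t)))"
  "L2on {0..1} (wderiv2 yy)"
proof -
  note S = smooth_sin2[where A=1 and k=k1 and B=0 and j=k1 and c=1]
  have e: "(\<lambda>x. 1 * complex_of_real (1 * sin (k1 * x) + 0 * sin (k1 * x))) = yy"
    unfolding yy_def by simp
  show "H1 yy" "H2 yy" "AE t in lebesgue_on {0..1}. wderiv2 yy t = complex_of_real (- (k1^2 * sin (k1 * t)))"
    "L2on {0..1} (wderiv2 yy)"
    using S unfolding e by auto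
qed

lemma vals: "uu 0 = 0" "uu 1 = 0" "vv 0 = 0" "vv 1 = 0" "yy 0 = 0" "yy 1 = 0" "zz 0 = 0" "zz 1 = 0"
  unfolding uu_def vv_def yy_def zz_def UU_def k1_def k2_def by simp_all

lemma conts: "continuous_on {0..1} uu" "continuous_on {0..1} vv" "continuous_on {0..1} yy" "continuous_on {0..1} zz"
  unfolding uu_def vv_def yy_def zz_def UU_def by (intro continuous_intros)+

lemma H1vz: "H1 vv" "H1 zz"
  unfolding vv_def zz_def by (intro H1_scale uu_props yy_props)+

lemma in_H_XX: "in_H XX"
  unfolding XX_def using uu_props yy_props vals conts
  by (simp add: H1L_def H10_def L2on_cont L2on_zero)

lemma in_DA_XX: "in_DA \<gamma> \<alpha> \<eta> XX"
proof -
  have f5: "(\<lambda>\<xi>. - complex_of_real (\<xi>^2 + \<eta>) * 0 + vv 1 * complex_of_real (mu \<alpha> \<xi>)) = (\<lambda>\<xi>. 0)"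
    using vals by simp
  show ?thesis
    unfolding XX_def in_DA.simps
    using in_H_XX[unfolded XX_def] uu_props yy_props vals H1vz
    by (simp add: H1L_def H10_def L2on_zero f5 del: in_H.simps)
qed

lemma in_H_opA: "in_H (opA (s^2) b \<alpha> \<eta> XX)"
proof -
  have f5: "(\<lambda>\<xi>. - complex_of_real (\<xi>^2 + \<eta>) * 0 + vv 1 * complex_of_real (mu \<alpha> \<xi>)) = (\<lambda>\<xi>. 0)"
    using vals by simp
  have L2v: "L2on {0..1} vv" and L2z: "L2on {0..1} zz" using conts by (auto intro: L2on_cont)
  show ?thesis
    unfolding XX_def opA.simps in_H.simps
    using uu_props yy_props vals H1vz L2v L2z
    by (simp add: H1L_def H10_def L2on_zero f5 L2on_diff L2on_add L2on_scale)
qed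

end

context par
begin

lemma L2_yy: "L2norm2 {0..1} yy = 1/2"
proof -
  have "2 * k1 = real (2*n) * pi" unfolding k1_def by simp
  then have s2: "sin (2 * k1) = 0" by (simp only: sin_npi)
  have "L2norm2 {0..1} yy = integral\<^sup>L (lebesgue_on {0..1}) (\<lambda>t. (sin (k1 * t))^2)"
    unfolding L2norm2_def yy_def by simp
  also have "\<dots> = 1/2" by (rule int_sin_sq[OF k1_ne s2])
  finally show ?thesis .
qed

lemma Hnorm_XX_ge:
  assumes g: "\<gamma> * kappa \<alpha> \<ge> 0"
  shows "Hnorm (s^2) \<gamma> \<alpha> XX \<ge> lam / sqrt 2"
proof -
  have z: "L2norm2 {0..1} zz = lam^2 / 2"
    unfolding zz_def L2norm2_scale L2_yy by (simp add: norm_mult)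
  have "lam^2 / 2 \<le> L2norm2 {0..1} vv + L2norm2 {0..1} (wderiv uu) + L2norm2 {0..1} zz
      + s^2 * L2norm2 {0..1} (wderiv yy) + \<gamma> * kappa \<alpha> * L2norm2 UNIV (\<lambda>\<xi>::real. 0::complex)"
    unfolding z using L2norm2_nonneg[of "{0..1}" vv] L2norm2_nonneg[of "{0..1}" "wderiv uu"]
      L2norm2_nonneg[of "{0..1}" "wderiv yy"] g
    by (simp add: L2norm2_zero)
  then have "sqrt (lam^2 / 2) \<le> Hnorm (s^2) \<gamma> \<alpha> XX"
    unfolding XX_def Hnorm.simps by (rule real_sqrt_le_mono)
  moreover have "sqrt (lam^2 / 2) = lam / sqrt 2"
    using lam_pos by (simp add: real_sqrt_divide)
  ultimately show ?thesis by simp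
qed

definition "K1 = 2 * pi * s * \<bar>b\<bar> / e"
definition "K2 = s^2 * \<bar>b\<bar>^2 * (1 + 1/s) / e"

lemma residual_bound:
  "Hnorm (s^2) \<gamma> \<alpha> (st_diff (opA (s^2) b \<alpha> \<eta> XX) (st_scale (\<i> * complex_of_real lam) XX))
     \<le> sqrt (K1^2 + K2^2)"
proof -
  define L where "L = \<i> * complex_of_real lam"
  define R2 where "R2 = (\<lambda>x. (wderiv2 uu x - complex_of_real b * zz x) + - 1 * (L * vv x))"
  define R4 where "R4 = (\<lambda>x. (complex_of_real (s^2) * wderiv2 yy x + complex_of_real b * vv x) + - 1 * (L * zz x))"
  have R: "st_diff (opA (s^2) b \<alpha> \<eta> XX) (st_scale L XX) = ((\<lambda>x. 0), R2, (\<lambda>x. 0), R4, (\<lambda>\<xi>. 0))"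
    unfolding XX_def R2_def R4_def st_diff_def
    by (simp add: fun_eq_iff vals vv_def zz_def L_def)
  define n2 where "n2 = (\<lambda>t. \<i> * complex_of_real (DD * (lam^2 - k2^2) * sin (k2 * t)))"
  define n4 where "n4 = (\<lambda>t. complex_of_real (- b * lam * UU t))"
  have hCC: "CC * lam^2 = CC * k1^2 + lam * b" using CC_prop unfolding k1_def by (simp add: algebra_simps)
  have hlam: "lam^2 = s^2 * k1^2" unfolding lam_def k1_def by (simp add: power_mult_distrib mult_ac)
  have ae2: "AE t in lebesgue_on {0..1}. R2 t = n2 t"
    using uu_props(4)
  proof (rule eventually_mono)
    fix t assume w: "wderiv2 uu t = \<i> * complex_of_real (- CC * k1^2 * sin (k1 * t) - DD * k2^2 * sin (k2 * t))"
    have "- CC * k1^2 * sin (k1 * t) - DD * k2^2 * sin (k2 * t) - b * lam * sin (k1 * t)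
          + lam^2 * (CC * sin (k1 * t) + DD * sin (k2 * t))
        = sin (k1 * t) * (CC * lam^2 - CC * k1^2 - lam * b) + DD * (lam^2 - k2^2) * sin (k2 * t)"
      by (simp add: algebra_simps)
    also have "\<dots> = DD * (lam^2 - k2^2) * sin (k2 * t)" using hCC by simp
    finally have e: "- CC * k1^2 * sin (k1 * t) - DD * k2^2 * sin (k2 * t) - b * lam * sin (k1 * t)
          + lam^2 * (CC * sin (k1 * t) + DD * sin (k2 * t)) = DD * (lam^2 - k2^2) * sin (k2 * t)" .
    show "R2 t = n2 t"
      unfolding R2_def n2_def w unfolding L_def vv_def uu_def zz_def yy_def UU_def
      using e by (simp add: complex_eq_iff algebra_simps power2_eq_square)
  qed
  have ae4: "AE t in lebesgue_on {0..1}. R4 t = n4 t"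
    using yy_props(3)
  proof (rule eventually_mono)
    fix t assume w: "wderiv2 yy t = complex_of_real (- (k1^2 * sin (k1 * t)))"
    have e: "s^2 * (- (k1^2 * sin (k1 * t))) - b * lam * UU t + lam^2 * sin (k1 * t) = - b * lam * UU t"
      using hlam by (simp add: algebra_simps)
    show "R4 t = n4 t"
      unfolding R4_def n4_def w unfolding L_def vv_def uu_def zz_def yy_def
      using e by (simp add: complex_eq_iff algebra_simps power2_eq_square)
  qed
  have L2v: "L2on {0..1} vv" and L2z: "L2on {0..1} zz" using conts by (auto intro: L2on_cont)
  have L2R2: "L2on {0..1} R2" unfolding R2_def
    by (intro L2on_add L2on_diff L2on_scale uu_props(5) L2v L2z)
  have L2R4: "L2on {0..1} R4" unfolding R4_def
    by (intro L2on_add L2on_scale yy_props(4) L2v L2z)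
  have cn2: "continuous_on {0..1} n2" unfolding n2_def by (intro continuous_intros)
  have cn4: "continuous_on {0..1} n4" unfolding n4_def UU_def by (intro continuous_intros)
  have b2: "L2norm2 {0..1} n2 \<le> K1^2"
  proof (rule L2norm2_bound[OF cn2])
    fix t :: real
    have "cmod (n2 t) = \<bar>DD * (lam^2 - k2^2) * sin (k2 * t)\<bar>" unfolding n2_def
      by (simp only: norm_mult norm_ii norm_of_real mult_1)
    also have "\<dots> = \<bar>DD * (lam^2 - k2^2)\<bar> * \<bar>sin (k2 * t)\<bar>" by (rule abs_mult)
    also have "\<dots> \<le> \<bar>DD * (lam^2 - k2^2)\<bar> * 1" by (intro mult_left_mono) auto
    also have "\<dots> \<le> K1" using bound_r2 unfolding K1_def k2_def by simp
    finally show "cmod (n2 t) \<le> K1" .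
  qed
  have b4: "L2norm2 {0..1} n4 \<le> K2^2"
  proof (rule L2norm2_bound[OF cn4])
    fix t :: real
    have "\<bar>UU t\<bar> \<le> \<bar>CC\<bar> + \<bar>DD\<bar>"
    proof -
      have "\<bar>UU t\<bar> \<le> \<bar>CC * sin (k1 * t)\<bar> + \<bar>DD * sin (k2 * t)\<bar>" unfolding UU_def by (rule abs_triangle_ineq)
      also have "\<dots> \<le> \<bar>CC\<bar> * 1 + \<bar>DD\<bar> * 1" unfolding abs_mult by (intro add_mono mult_left_mono) auto
      finally show ?thesis by simp
    qed
    then have "\<bar>b\<bar> * lam * \<bar>UU t\<bar> \<le> \<bar>b\<bar> * lam * (\<bar>CC\<bar> + \<bar>DD\<bar>)"
      using lam_pos by (intro mult_left_mono) auto
    moreover have "cmod (n4 t) = \<bar>b\<bar> * lam * \<bar>UU t\<bar>" unfolding n4_def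
      using lam_pos by (simp only: norm_of_real abs_mult abs_minus abs_of_pos)
    ultimately have "cmod (n4 t) \<le> lam * \<bar>b\<bar> * (\<bar>CC\<bar> + \<bar>DD\<bar>)" by (simp add: mult_ac)
    also have "\<dots> \<le> K2" using bound_r4 unfolding K2_def .
    finally show "cmod (n4 t) \<le> K2" .
  qed
  have "Hnorm (s^2) \<gamma> \<alpha> (st_diff (opA (s^2) b \<alpha> \<eta> XX) (st_scale L XX))
      = sqrt (L2norm2 {0..1} R2 + L2norm2 {0..1} R4)"
    unfolding R by (simp add: wderiv_zero_L2 L2norm2_zero)
  also have "L2norm2 {0..1} R2 = L2norm2 {0..1} n2" by (rule L2norm2_cong_AE[OF L2R2 L2on_cont[OF cn2] ae2])
  also have "L2norm2 {0..1} R4 = L2norm2 {0..1} n4" by (rule L2norm2_cong_AE[OF L2R4 L2on_cont[OF cn4] ae4])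
  also have "sqrt (L2norm2 {0..1} n2 + L2norm2 {0..1} n4) \<le> sqrt (K1^2 + K2^2)"
    using b2 b4 by simp
  finally show ?thesis unfolding L_def .
qed

end

theorem theorem3p3:
  fixes \<alpha> \<eta> \<gamma> a b :: real and T :: "real \<Rightarrow> st \<Rightarrow> st"
  assumes "0 < \<alpha>" "\<alpha> < 1" "\<eta> > 0" "\<gamma> > 0" "a > 0" "a \<noteq> 1" "b \<noteq> 0"
    and "\<forall>k1 k2 :: int. (k1, k2) \<noteq> (0, 0) \<longrightarrow>
           b^2 \<noteq> ((of_int k1)^2 - a * (of_int k2)^2) * (a * (of_int k1)^2 - (of_int k2)^2)
                 / ((a + 1) * ((of_int k1)^2 + (of_int k2)^2)) * pi^2"
    and "C0_contraction_sg_gen in_H (Hnorm a \<gamma> \<alpha>) (in_DA \<gamma> \<alpha> \<eta>) (opA a b \<alpha> \<eta>) T"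
  shows "\<not> unif_exp_stable in_H (Hnorm a \<gamma> \<alpha>) T"
proof
  assume stab: "unif_exp_stable in_H (Hnorm a \<gamma> \<alpha>) T"
  have a0: "a \<ge> 0" using assms(5) by simp
  have "sin (\<alpha> * pi) > 0" using assms(1,2) by (intro sin_gt_zero) auto
  then have kp: "kappa \<alpha> > 0" unfolding kappa_def by simp
  have g0: "\<gamma> * kappa \<alpha> \<ge> 0" using kp assms(4) by simp
  have "\<exists>C. \<forall>x l. in_DA \<gamma> \<alpha> \<eta> x \<longrightarrow> in_H x \<longrightarrow> in_H (opA a b \<alpha> \<eta> x) \<longrightarrow>
      Hnorm a \<gamma> \<alpha> x \<le> C * Hnorm a \<gamma> \<alpha> (st_diff (opA a b \<alpha> \<eta> x) (st_scale (\<i> * complex_of_real l) x))"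
  proof (rule resolvent_bound[where Hs=in_H and N="Hnorm a \<gamma> \<alpha>" and D="in_DA \<gamma> \<alpha> \<eta>" and A="opA a b \<alpha> \<eta>" and T=T])
    show "\<And>p q. in_H p \<Longrightarrow> in_H q \<Longrightarrow> in_H (st_add p q)" by (rule in_H_add)
    show "\<And>c p. in_H p \<Longrightarrow> in_H (st_scale c p)" by (rule in_H_scale)
    show "\<And>p q. in_H p \<Longrightarrow> in_H q \<Longrightarrow> Hnorm a \<gamma> \<alpha> (st_add p q) \<le> Hnorm a \<gamma> \<alpha> p + Hnorm a \<gamma> \<alpha> q"
      by (rule Hnorm_tri[OF a0 g0])
    show "\<And>c p. in_H p \<Longrightarrow> Hnorm a \<gamma> \<alpha> (st_scale c p) = cmod c * Hnorm a \<gamma> \<alpha> p" by (rule Hnorm_scale)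
    show "\<And>p. Hnorm a \<gamma> \<alpha> p \<ge> 0" by (rule Hnorm_nonneg[OF a0 g0])
    show "C0_contraction_sg_gen in_H (Hnorm a \<gamma> \<alpha>) (in_DA \<gamma> \<alpha> \<eta>) (opA a b \<alpha> \<eta>) T" by (rule assms(9))
    show "unif_exp_stable in_H (Hnorm a \<gamma> \<alpha>) T" by (rule stab)
  qed
  then obtain C0 where C0: "\<And>x l. in_DA \<gamma> \<alpha> \<eta> x \<Longrightarrow> in_H x \<Longrightarrow> in_H (opA a b \<alpha> \<eta> x) \<Longrightarrow>
      Hnorm a \<gamma> \<alpha> x \<le> C0 * Hnorm a \<gamma> \<alpha> (st_diff (opA a b \<alpha> \<eta> x) (st_scale (\<i> * complex_of_real l) x))"
    by blast
  define s where "s = sqrt a"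
  have sp: "s > 0" unfolding s_def using assms(5) by simp
  have as: "a = s^2" unfolding s_def using a0 by simp
  have s1: "s \<noteq> 1" using assms(6) as by auto
  define B0 where "B0 = sqrt ((2 * pi * s * \<bar>b\<bar> / \<bar>s^2 - 1\<bar>)^2 + (s^2 * \<bar>b\<bar>^2 * (1 + 1/s) / \<bar>s^2 - 1\<bar>)^2)"
  have B0n: "B0 \<ge> 0" unfolding B0_def by simp
  define n where "n = nat \<lceil>\<bar>C0\<bar> * B0 * sqrt 2 / (pi * s)\<rceil> + 1"
  have n1: "n \<ge> 1" unfolding n_def by simp
  have nbig: "real n > \<bar>C0\<bar> * B0 * sqrt 2 / (pi * s)"
  proof -
    have "\<bar>C0\<bar> * B0 * sqrt 2 / (pi * s) \<le> real (nat \<lceil>\<bar>C0\<bar> * B0 * sqrt 2 / (pi * s)\<rceil>)"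
      by (rule real_nat_ceiling_ge)
    then show ?thesis unfolding n_def by simp
  qed
  define m where "m = nat \<lceil>real n * s\<rceil>"
  have m1: "real n * s \<le> real m" unfolding m_def by (rule real_nat_ceiling_ge)
  have "real n * s \<ge> 0" using sp by simp
  then have "real m = of_int \<lceil>real n * s\<rceil>" unfolding m_def by simp
  then have m2: "real m < real n * s + 1" by linarith
  interpret P: par s b n m using sp s1 n1 m1 m2 by unfold_locales auto
  have K: "P.K1 = 2 * pi * s * \<bar>b\<bar> / \<bar>s^2 - 1\<bar>" "P.K2 = s^2 * \<bar>b\<bar>^2 * (1 + 1/s) / \<bar>s^2 - 1\<bar>"
    unfolding P.K1_def P.K2_def P.e_def by simp_all
  have Rb: "Hnorm a \<gamma> \<alpha> (st_diff (opA a b \<alpha> \<eta> P.XX) (st_scale (\<i> * complex_of_real P.lam) P.XX)) \<le> B0"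
    using P.residual_bound[of \<gamma> \<alpha> \<eta>] unfolding as B0_def K .
  have lo: "Hnorm a \<gamma> \<alpha> P.XX \<ge> P.lam / sqrt 2" using P.Hnorm_XX_ge[OF g0] unfolding as .
  have up: "Hnorm a \<gamma> \<alpha> P.XX \<le> C0 * Hnorm a \<gamma> \<alpha> (st_diff (opA a b \<alpha> \<eta> P.XX) (st_scale (\<i> * complex_of_real P.lam) P.XX))"
    by (rule C0) (use P.in_DA_XX P.in_H_XX P.in_H_opA[of \<alpha> \<eta>] as in auto)
  have "C0 * Hnorm a \<gamma> \<alpha> (st_diff (opA a b \<alpha> \<eta> P.XX) (st_scale (\<i> * complex_of_real P.lam) P.XX)) \<le> \<bar>C0\<bar> * B0"
  proof -
    have hn: "Hnorm a \<gamma> \<alpha> (st_diff (opA a b \<alpha> \<eta> P.XX) (st_scale (\<i> * complex_of_real P.lam) P.XX)) \<ge> 0"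
      by (rule Hnorm_nonneg[OF a0 g0])
    have "C0 * Hnorm a \<gamma> \<alpha> (st_diff (opA a b \<alpha> \<eta> P.XX) (st_scale (\<i> * complex_of_real P.lam) P.XX))
      \<le> \<bar>C0\<bar> * Hnorm a \<gamma> \<alpha> (st_diff (opA a b \<alpha> \<eta> P.XX) (st_scale (\<i> * complex_of_real P.lam) P.XX))"
      using hn by (intro mult_right_mono) auto
    also have "\<dots> \<le> \<bar>C0\<bar> * B0" using Rb by (intro mult_left_mono) auto
    finally show ?thesis .
  qed
  moreover have "\<bar>C0\<bar> * B0 < P.lam / sqrt 2"
  proof -
    have "\<bar>C0\<bar> * B0 * sqrt 2 / (pi * s) < real n" by (rule nbig)
    then have "\<bar>C0\<bar> * B0 * sqrt 2 < real n * (pi * s)" using sp by (simp add: field_simps)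
    then show ?thesis unfolding P.lam_def by (simp add: field_simps mult_ac)
  qed
  ultimately show False using lo up by linarith
qed

end
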